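(* Let $W$ be a standard Brownian motion with respect to $\mathbb F$, $W_0=0$, and consider the case without hedging instruments ($S\equiv1$), so that $u_A(\tau,\sigma)=E[-\exp(-\alpha_A(C_A-R(\tau,\sigma)))]$ and $u_B(\tau,\sigma)=E[-\exp(-\alpha_B(C_B+R(\tau,\sigma)))]$. Let $X_t=W_t+\mu t$ and $Y_t=W_t+\mu t+\delta$, $t\in[0,T]$, with $\mu,\delta\ge0$, and assume $\alpha_B/2<\mu<\alpha_A/2$, $0<\delta<(\alpha_A/2+\mu)T$ and $C_B=0$. Then: (a) for every $\sigma\in\mathcal T_0$, $\tau\equiv T$ maximizes $\tau\mapsto u_B(\tau,\sigma)$ over $\mathcal T_0$; (b) if $C_A=0$, then $\sigma\equiv0$ maximizes $\sigma\mapsto u_A(T,\sigma)$ over $\mathcal T_0$; (c) if $C_A=W_T+\mu T$, then $\sigma\equiv T$ maximizes $\sigma\mapsto u_A(T,\sigma)$ over $\mathcal T_0$.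
   Context: $(\Omega,\mathcal F,\mathbb F=(\mathcal F_t)_{t\in[0,T]},P)$ is a filtered probability space with $T\in(0,\infty)$ satisfying the usual conditions; $\mathcal T_0$ is the set of $[0,T]$-valued stopping times. $\alpha_A,\alpha_B>0$ are the risk aversions of the seller $A$ and buyer $B$, and $R(\tau,\sigma):=X_\tau\mathbf 1_{\{\tau\le\sigma\}}+Y_\sigma\mathbf 1_{\{\sigma<\tau\}}$ is the payoff paid by $A$ to $B$ when $B$ chooses $\tau$ and $A$ chooses $\sigma$. *)

theory Defs
  imports "HOL-Probability.Probability"
begin

definition filtered_prob_space_usual ::
  "'a measure \<Rightarrow> (real \<Rightarrow> 'a measure) \<Rightarrow> real \<Rightarrow> bool" where
  "filtered_prob_space_usual M F T \<longleftrightarrow>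
     prob_space M \<and> 0 < T \<and>
     (\<forall>t\<in>{0..T}. space (F t) = space M \<and> sets (F t) \<subseteq> sets M) \<and>
     (\<forall>s\<in>{0..T}. \<forall>t\<in>{0..T}. s \<le> t \<longrightarrow> sets (F s) \<subseteq> sets (F t)) \<and>
     \<comment> \<open>completeness: F_0 contains all P-null sets\<close>
     (\<forall>A. A \<subseteq> space M \<and> (\<exists>N\<in>sets M. A \<subseteq> N \<and> emeasure M N = 0) \<longrightarrow> A \<in> sets (F 0)) \<and>
     \<comment> \<open>right-continuity on [0,T)\<close>
     (\<forall>t\<in>{0..<T}. sets (F t) = (\<Inter>s\<in>{t<..T}. sets (F s)))"

definition stopping_times_0 :: "'a measure \<Rightarrow> (real \<Rightarrow> 'a measure) \<Rightarrow> real \<Rightarrow> ('a \<Rightarrow> real) set" where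
  "stopping_times_0 M F T =
     {\<tau>. (\<forall>\<omega>\<in>space M. \<tau> \<omega> \<in> {0..T}) \<and>
          (\<forall>t\<in>{0..T}. {\<omega>\<in>space M. \<tau> \<omega> \<le> t} \<in> sets (F t))}"

definition std_brownian_motion ::
  "'a measure \<Rightarrow> (real \<Rightarrow> 'a measure) \<Rightarrow> real \<Rightarrow> (real \<Rightarrow> 'a \<Rightarrow> real) \<Rightarrow> bool" where
  "std_brownian_motion M F T W \<longleftrightarrow>
     (\<forall>\<omega>\<in>space M. W 0 \<omega> = 0) \<and>
     (\<forall>\<omega>\<in>space M. continuous_on {0..T} (\<lambda>t. W t \<omega>)) \<and>
     (\<forall>t\<in>{0..T}. W t \<in> borel_measurable (F t)) \<and>
     (\<forall>s t. 0 \<le> s \<and> s < t \<and> t \<le> T \<longrightarrow>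
        distributed M lborel (\<lambda>\<omega>. W t \<omega> - W s \<omega>) (normal_density 0 (sqrt (t - s))) \<and>
        (\<forall>A\<in>sets (F s). \<forall>B\<in>sets borel.
           measure M ({\<omega>\<in>space M. W t \<omega> - W s \<omega> \<in> B} \<inter> A)
             = measure M {\<omega>\<in>space M. W t \<omega> - W s \<omega> \<in> B} * measure M A))"

definition payoff ::
  "(real \<Rightarrow> 'a \<Rightarrow> real) \<Rightarrow> (real \<Rightarrow> 'a \<Rightarrow> real) \<Rightarrow> ('a \<Rightarrow> real) \<Rightarrow> ('a \<Rightarrow> real) \<Rightarrow> 'a \<Rightarrow> real" where
  "payoff X Y \<tau> \<sigma> \<omega> = (if \<tau> \<omega> \<le> \<sigma> \<omega> then X (\<tau> \<omega>) \<omega> else Y (\<sigma> \<omega>) \<omega>)"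

text \<open>Expected exponential utilities (with S = 1), taking values in the extended
  reals: E[-exp(Z)] = - E[exp(Z)], the latter a nonnegative (possibly infinite)
  integral.\<close>

definition util_A ::
  "'a measure \<Rightarrow> real \<Rightarrow> ('a \<Rightarrow> real) \<Rightarrow> (real \<Rightarrow> 'a \<Rightarrow> real) \<Rightarrow> (real \<Rightarrow> 'a \<Rightarrow> real)
    \<Rightarrow> ('a \<Rightarrow> real) \<Rightarrow> ('a \<Rightarrow> real) \<Rightarrow> ereal" where
  "util_A M \<alpha> C X Y \<tau> \<sigma> =
     - enn2ereal (\<integral>\<^sup>+ \<omega>. ennreal (exp (- \<alpha> * (C \<omega> - payoff X Y \<tau> \<sigma> \<omega>))) \<partial>M)"

definition util_B ::
  "'a measure \<Rightarrow> real \<Rightarrow> ('a \<Rightarrow> real) \<Rightarrow> (real \<Rightarrow> 'a \<Rightarrow> real) \<Rightarrow> (real \<Rightarrow> 'a \<Rightarrow> real)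
    \<Rightarrow> ('a \<Rightarrow> real) \<Rightarrow> ('a \<Rightarrow> real) \<Rightarrow> ereal" where
  "util_B M \<alpha> C X Y \<tau> \<sigma> =
     - enn2ereal (\<integral>\<^sup>+ \<omega>. ennreal (exp (- \<alpha> * (C \<omega> + payoff X Y \<tau> \<sigma> \<omega>))) \<partial>M)"

end

theory Submission
  imports Defs
begin

locale bm =
  fixes M :: "'a measure" and F :: "real \<Rightarrow> 'a measure" and T :: real
    and W :: "real \<Rightarrow> 'a \<Rightarrow> real"
  assumes fps: "filtered_prob_space_usual M F T" and BM: "std_brownian_motion M F T W"
begin

lemma PS: "prob_space M" using fps by (simp add: filtered_prob_space_usual_def)
lemma Tpos: "0 < T" using fps by (simp add: filtered_prob_space_usual_def)
lemma spaceF: "0 \<le> t \<Longrightarrow> t \<le> T \<Longrightarrow> space (F t) = space M"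
  using fps by (simp add: filtered_prob_space_usual_def)
lemma setsF: "0 \<le> t \<Longrightarrow> t \<le> T \<Longrightarrow> sets (F t) \<subseteq> sets M"
  using fps by (simp add: filtered_prob_space_usual_def)
lemma monoF: assumes "0 \<le> s" "s \<le> t" "t \<le> T" shows "sets (F s) \<subseteq> sets (F t)"
proof -
  have "\<forall>s\<in>{0..T}. \<forall>t\<in>{0..T}. s \<le> t \<longrightarrow> sets (F s) \<subseteq> sets (F t)"
    using fps unfolding filtered_prob_space_usual_def by blast
  moreover have "s \<in> {0..T}" "t \<in> {0..T}" using assms by auto
  ultimately show ?thesis using assms(2) by blast
qed

lemma subalg: "0 \<le> t \<Longrightarrow> t \<le> T \<Longrightarrow> subalgebra M (F t)"
  unfolding subalgebra_def using spaceF setsF by blast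

lemma measF: assumes "0 \<le> t" "t \<le> T" "f \<in> borel_measurable (F t)" shows "f \<in> borel_measurable M"
  by (rule measurable_from_subalg[OF subalg[OF assms(1,2)] assms(3)])

lemma setF_mono: assumes "0 \<le> s" "s \<le> t" "t \<le> T" "A \<in> sets (F s)" shows "A \<in> sets (F t)"
  using assms(4) monoF[OF assms(1-3)] by blast

lemma measF_mono: assumes "0 \<le> s" "s \<le> t" "t \<le> T" "f \<in> borel_measurable (F s)"
  shows "f \<in> borel_measurable (F t)"
proof -
  have "subalgebra (F t) (F s)" unfolding subalgebra_def
    using spaceF[of s] spaceF[of t] monoF[OF assms(1-3)] assms by auto
  then show ?thesis by (rule measurable_from_subalg[OF _ assms(4)])
qed

lemma W0: "\<omega> \<in> space M \<Longrightarrow> W 0 \<omega> = 0"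
  using BM by (simp add: std_brownian_motion_def)
lemma Wcont: "\<omega> \<in> space M \<Longrightarrow> continuous_on {0..T} (\<lambda>t. W t \<omega>)"
  using BM by (simp add: std_brownian_motion_def)
lemma WmeasF: "0 \<le> t \<Longrightarrow> t \<le> T \<Longrightarrow> W t \<in> borel_measurable (F t)"
  using BM by (simp add: std_brownian_motion_def)
lemma Wmeas: "0 \<le> t \<Longrightarrow> t \<le> T \<Longrightarrow> W t \<in> borel_measurable M"
  using WmeasF measF by blast
lemma Wdist: "0 \<le> s \<Longrightarrow> s < t \<Longrightarrow> t \<le> T \<Longrightarrow>
   distributed M lborel (\<lambda>\<omega>. W t \<omega> - W s \<omega>) (\<lambda>x. ennreal (normal_density 0 (sqrt (t - s)) x))"
  using BM by (simp add: std_brownian_motion_def)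
lemma Windep: "0 \<le> s \<Longrightarrow> s < t \<Longrightarrow> t \<le> T \<Longrightarrow> A \<in> sets (F s) \<Longrightarrow> B \<in> sets borel \<Longrightarrow>
   measure M ({\<omega>\<in>space M. W t \<omega> - W s \<omega> \<in> B} \<inter> A)
             = measure M {\<omega>\<in>space M. W t \<omega> - W s \<omega> \<in> B} * measure M A"
  using BM by (simp add: std_brownian_motion_def)

abbreviation "ST \<equiv> stopping_times_0 M F T"

lemma ST_range: "\<tau> \<in> ST \<Longrightarrow> \<omega> \<in> space M \<Longrightarrow> 0 \<le> \<tau> \<omega> \<and> \<tau> \<omega> \<le> T"
  by (auto simp: stopping_times_0_def)
lemma ST_set: "\<tau> \<in> ST \<Longrightarrow> 0 \<le> t \<Longrightarrow> t \<le> T \<Longrightarrow> {\<omega>\<in>space M. \<tau> \<omega> \<le> t} \<in> sets (F t)"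
  by (auto simp: stopping_times_0_def)

lemma ST_min_meas: assumes "\<tau> \<in> ST" "0 \<le> t" "t \<le> T"
  shows "(\<lambda>\<omega>. min (\<tau> \<omega>) t) \<in> borel_measurable (F t)"
  unfolding borel_measurable_iff_le
proof (intro allI)
  fix a
  have sp: "space (F t) = space M" using spaceF assms by blast
  show "{w \<in> space (F t). min (\<tau> w) t \<le> a} \<in> sets (F t)"
  proof (cases "t \<le> a")
    case True
    then have "{w \<in> space (F t). min (\<tau> w) t \<le> a} = space (F t)" by auto
    then show ?thesis by (metis sets.top)
  next
    case False
    show ?thesis
    proof (cases "a < 0")
      case True
      have "\<And>w. w \<in> space M \<Longrightarrow> \<not> min (\<tau> w) t \<le> a"
      proof -
        fix w assume "w \<in> space M"
        then have "0 \<le> \<tau> w" using ST_range[OF assms(1)] by blast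
        then show "\<not> min (\<tau> w) t \<le> a" using True assms(2) by linarith
      qed
      then have "{w \<in> space (F t). min (\<tau> w) t \<le> a} = {}" unfolding sp by blast
      then show ?thesis by (metis (no_types) sets.empty_sets)
    next
      case False2: False
      have "\<And>w. (min (\<tau> w) t \<le> a) = (\<tau> w \<le> a)" using False by linarith
      then have e: "{w \<in> space (F t). min (\<tau> w) t \<le> a} = {\<omega>\<in>space M. \<tau> \<omega> \<le> a}"
        unfolding sp by presburger
      have a0: "0 \<le> a" "a \<le> T" "a \<le> t" using False False2 assms by linarith+
      have "{\<omega>\<in>space M. \<tau> \<omega> \<le> a} \<in> sets (F a)"
        by (rule ST_set[OF assms(1) a0(1,2)])
      then have "{\<omega>\<in>space M. \<tau> \<omega> \<le> a} \<in> sets (F t)"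
        by (rule setF_mono[OF a0(1,3) assms(3)])
      then show ?thesis unfolding e .
    qed
  qed
qed

lemma ST_meas: "\<tau> \<in> ST \<Longrightarrow> \<tau> \<in> borel_measurable M"
proof -
  assume a: "\<tau> \<in> ST"
  have m: "(\<lambda>\<omega>. min (\<tau> \<omega>) T) \<in> borel_measurable M"
    using ST_min_meas[OF a, of T] Tpos measF[of T] by simp
  have "\<And>\<omega>. \<omega> \<in> space M \<Longrightarrow> min (\<tau> \<omega>) T = \<tau> \<omega>" using ST_range[OF a] by simp
  then show ?thesis using measurable_cong[of M "\<lambda>\<omega>. min (\<tau> \<omega>) T" \<tau>] m by simp
qed

lemma ST_max: assumes "\<tau> \<in> ST" "\<sigma> \<in> ST" shows "(\<lambda>\<omega>. max (\<tau> \<omega>) (\<sigma> \<omega>)) \<in> ST"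
  unfolding stopping_times_0_def
proof (intro CollectI conjI ballI)
  fix \<omega> assume w: "\<omega> \<in> space M"
  show "max (\<tau> \<omega>) (\<sigma> \<omega>) \<in> {0..T}" using ST_range[OF assms(1) w] ST_range[OF assms(2) w] by (simp add: le_max_iff_disj)
next
  fix t assume t: "t \<in> {0..T}"
  have "{\<omega> \<in> space M. max (\<tau> \<omega>) (\<sigma> \<omega>) \<le> t} = {\<omega>\<in>space M. \<tau> \<omega> \<le> t} \<inter> {\<omega>\<in>space M. \<sigma> \<omega> \<le> t}"
    by auto
  moreover have "{\<omega>\<in>space M. \<tau> \<omega> \<le> t} \<in> sets (F t)" "{\<omega>\<in>space M. \<sigma> \<omega> \<le> t} \<in> sets (F t)"
    using ST_set assms t by auto
  ultimately show "{\<omega> \<in> space M. max (\<tau> \<omega>) (\<sigma> \<omega>) \<le> t} \<in> sets (F t)" by simp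
qed

definition dk :: "nat \<Rightarrow> real \<Rightarrow> nat" where "dk n x = nat \<lceil>x * 2^n / T\<rceil>"
definition dg :: "nat \<Rightarrow> real \<Rightarrow> real" where "dg n x = real (dk n x) * T / 2^n"

lemma dk_real: assumes x: "0 \<le> x" shows "real (dk n x) = of_int \<lceil>x * 2^n / T\<rceil>"
proof -
  have "0 \<le> x * 2^n / T" using x Tpos by simp
  then have "0 \<le> \<lceil>x * 2^n / T\<rceil>" by (simp add: zero_le_ceiling)
  then show ?thesis unfolding dk_def by (rule of_nat_nat)
qed

lemma dg_ge: assumes x: "0 \<le> x" shows "x \<le> dg n x"
proof -
  have "x * 2^n / T \<le> real (dk n x)" unfolding dk_real[OF x] by (rule le_of_int_ceiling)
  then have "x * 2^n / T * T / 2^n \<le> real (dk n x) * T / 2^n"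
    using Tpos by (intro divide_right_mono mult_right_mono) auto
  moreover have "x * 2^n / T * T / 2^n = x" using Tpos by simp
  ultimately show ?thesis unfolding dg_def by linarith
qed

lemma dk_le: assumes a: "0 \<le> x" "x \<le> T" shows "dk n x \<le> 2^n"
proof -
  have "x * 2^n / T \<le> T * 2^n / T" using a Tpos by (intro divide_right_mono mult_right_mono) auto
  also have "T * 2^n / T = 2^n" using Tpos by simp
  finally have "x * 2^n / T \<le> of_int (2^n)" by simp
  then have "\<lceil>x * 2^n / T\<rceil> \<le> 2^n" by (rule ceiling_le)
  then have "real (dk n x) \<le> real_of_int (2^n)" unfolding dk_real[OF a(1)] by (rule of_int_le_iff[THEN iffD2])
  then have "real (dk n x) \<le> real (2^n)" by simp
  then show ?thesis by (rule of_nat_le_iff[THEN iffD1])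
qed

lemma dg_le: assumes a: "0 \<le> x" "x \<le> T" shows "dg n x \<le> T"
proof -
  have "real (dk n x) \<le> real (2^n)" using dk_le[OF a] by (rule of_nat_le_iff[THEN iffD2])
  then have "real (dk n x) * T / 2^n \<le> real (2^n) * T / 2^n" using Tpos by (intro divide_right_mono mult_right_mono) auto
  also have "real (2^n) * T / 2^n = T" by simp
  finally show ?thesis unfolding dg_def .
qed

lemma dg_up: assumes a: "0 \<le> x" shows "dg n x \<le> x + T / 2^n"
proof -
  have "real (dk n x) \<le> x * 2^n / T + 1" unfolding dk_real[OF a]
    using ceiling_correct[of "x * 2^n / T"] by linarith
  then have "real (dk n x) * T / 2^n \<le> (x * 2^n / T + 1) * T / 2^n" using Tpos by (intro divide_right_mono mult_right_mono) auto
  also have "(x * 2^n / T + 1) * T / 2^n = x + T / 2^n" using Tpos by (simp add: field_simps)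
  finally show ?thesis unfolding dg_def .
qed

lemma dg_lim: assumes a: "0 \<le> x" shows "(\<lambda>n. dg n x) \<longlonglongrightarrow> x"
proof -
  have "(\<lambda>n. T / 2^n) \<longlonglongrightarrow> 0"
    by (intro LIMSEQ_divide_realpow_zero) auto
  then have "(\<lambda>n. x + T / 2^n) \<longlonglongrightarrow> x + 0"
    by (intro tendsto_add tendsto_const)
  then have lim2: "(\<lambda>n. x + T / 2^n) \<longlonglongrightarrow> x" by simp
  show ?thesis
    by (rule real_tendsto_sandwich[of "\<lambda>_. x" _ _ "\<lambda>n. x + T / 2^n", OF _ _ tendsto_const lim2])
       (use dg_ge[OF a] dg_up[OF a] in auto)
qed

lemma nn_normal_exp: assumes "0 < sd"
  shows "(\<integral>\<^sup>+x. ennreal (normal_density 0 sd x) * ennreal (exp (\<theta>* x)) \<partial>lborel) = ennreal (exp (\<theta>^2* (sd* sd)/2))"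
proof -
  have eq: "ennreal (normal_density 0 sd x) * ennreal (exp (\<theta>* x)) =
      ennreal (exp (\<theta>^2* (sd* sd)/2)) * ennreal (normal_density (\<theta>* (sd* sd)) sd x)" for x
  proof -
    have "normal_density 0 sd x * exp (\<theta>* x) = exp (\<theta>^2* (sd* sd)/2) * normal_density (\<theta>* (sd* sd)) sd x"
      unfolding normal_density_def
      using assms by (simp add: field_simps power2_eq_square exp_add[symmetric] exp_diff[symmetric])
    then show ?thesis by (simp add: ennreal_mult[symmetric])
  qed
  have one: "(\<integral>\<^sup>+x. ennreal (normal_density (\<theta>* (sd* sd)) sd x) \<partial>lborel) = 1"
    using assms by (subst nn_integral_eq_integral) auto
  show ?thesis unfolding eq
    by (subst nn_integral_cmult) (auto simp: one)
qed

lemma Wexp: assumes "0 \<le> s" "s < t" "t \<le> T"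
  shows "(\<integral>\<^sup>+\<omega>. ennreal (exp (\<theta>* (W t \<omega> - W s \<omega>))) \<partial>M) = ennreal (exp (\<theta>^2* (t-s)/2))"
proof -
  have "(\<integral>\<^sup>+\<omega>. ennreal (exp (\<theta>* (W t \<omega> - W s \<omega>))) \<partial>M)
      = (\<integral>\<^sup>+x. ennreal (normal_density 0 (sqrt (t-s)) x) * ennreal (exp (\<theta>* x)) \<partial>lborel)"
    by (rule distributed_nn_integral[OF Wdist[OF assms], symmetric]) auto
  also have "\<dots> = ennreal (exp (\<theta>^2* ((sqrt (t-s))* (sqrt (t-s)))/2))"
    by (rule nn_normal_exp) (use assms in auto)
  finally show ?thesis using assms by simp
qed

lemma setsF': "0 \<le> s \<Longrightarrow> s < t \<Longrightarrow> t \<le> T \<Longrightarrow> A \<in> sets (F s) \<Longrightarrow> A \<in> sets M"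
  using setsF[of s] by (meson less_le_trans less_imp_le subsetD)

lemma measF': "0 \<le> s \<Longrightarrow> s < t \<Longrightarrow> t \<le> T \<Longrightarrow> f \<in> borel_measurable (F s) \<Longrightarrow> f \<in> borel_measurable M"
  using measF[of s] by (meson less_le_trans less_imp_le)

lemma Dmeas: "0 \<le> s \<Longrightarrow> s \<le> T \<Longrightarrow> 0 \<le> t \<Longrightarrow> t \<le> T \<Longrightarrow> (\<lambda>\<omega>. W t \<omega> - W s \<omega>) \<in> borel_measurable M"
  using Wmeas by measurable

lemma Dmeas': "0 \<le> s \<Longrightarrow> s < t \<Longrightarrow> t \<le> T \<Longrightarrow> (\<lambda>\<omega>. W t \<omega> - W s \<omega>) \<in> borel_measurable M"
  by (rule Dmeas) auto

lemma indep_set_fun: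
  fixes f :: "real \<Rightarrow> ennreal"
  assumes st: "0 \<le> s" "s < t" "t \<le> T" and A: "A \<in> sets (F s)" and f: "f \<in> borel_measurable borel"
  shows "(\<integral>\<^sup>+\<omega>. indicator A \<omega> * f (W t \<omega> - W s \<omega>) \<partial>M) = emeasure M A * (\<integral>\<^sup>+\<omega>. f (W t \<omega> - W s \<omega>) \<partial>M)"
  using f
proof (induct rule: borel_measurable_induct)
  case (cong f g)
  then show ?case by simp
next
  case (set B)
  interpret P: prob_space M by (rule PS)
  have AM[measurable]: "A \<in> sets M" using setsF'[OF st A] .
  have DM[measurable]: "(\<lambda>\<omega>. W t \<omega> - W s \<omega>) \<in> borel_measurable M" using Dmeas'[OF st] .
  have BM: "B \<in> sets borel" using set by simp
  have S: "{\<omega>\<in>space M. W t \<omega> - W s \<omega> \<in> B} \<in> sets M" using BM by measurable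
  have "(\<integral>\<^sup>+\<omega>. indicator A \<omega> * indicator B (W t \<omega> - W s \<omega>) \<partial>M)
      = (\<integral>\<^sup>+\<omega>. indicator ({\<omega>\<in>space M. W t \<omega> - W s \<omega> \<in> B} \<inter> A) \<omega> \<partial>M)"
    by (intro nn_integral_cong) (auto split: split_indicator)
  also have "\<dots> = emeasure M ({\<omega>\<in>space M. W t \<omega> - W s \<omega> \<in> B} \<inter> A)"
    using S AM by simp
  also have "\<dots> = ennreal (measure M {\<omega>\<in>space M. W t \<omega> - W s \<omega> \<in> B} * measure M A)"
    using S AM Windep[OF st A BM] by (simp add: P.emeasure_eq_measure)
  also have "\<dots> = emeasure M A * emeasure M {\<omega>\<in>space M. W t \<omega> - W s \<omega> \<in> B}"
    using S AM by (simp add: P.emeasure_eq_measure ennreal_mult mult.commute)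
  also have "emeasure M {\<omega>\<in>space M. W t \<omega> - W s \<omega> \<in> B} = (\<integral>\<^sup>+\<omega>. indicator B (W t \<omega> - W s \<omega>) \<partial>M)"
  proof -
    have "(\<integral>\<^sup>+\<omega>. indicator B (W t \<omega> - W s \<omega>) \<partial>M) = (\<integral>\<^sup>+\<omega>. indicator {\<omega>\<in>space M. W t \<omega> - W s \<omega> \<in> B} \<omega> \<partial>M)"
      by (intro nn_integral_cong) (auto split: split_indicator)
    then show ?thesis using nn_integral_indicator[OF S] by simp
  qed
  finally show ?case .
next
  case (mult u c)
  have AM[measurable]: "A \<in> sets M" using setsF'[OF st A] .
  have DM[measurable]: "(\<lambda>\<omega>. W t \<omega> - W s \<omega>) \<in> borel_measurable M" using Dmeas'[OF st] .
  have um[measurable]: "u \<in> borel_measurable borel" using mult by simp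
  have e1: "(\<integral>\<^sup>+\<omega>. indicator A \<omega> * (c * u (W t \<omega> - W s \<omega>)) \<partial>M) = (\<integral>\<^sup>+\<omega>. c * (indicator A \<omega> * u (W t \<omega> - W s \<omega>)) \<partial>M)"
    by (simp add: ac_simps)
  have e2: "(\<integral>\<^sup>+\<omega>. c * (indicator A \<omega> * u (W t \<omega> - W s \<omega>)) \<partial>M) = c * (\<integral>\<^sup>+\<omega>. indicator A \<omega> * u (W t \<omega> - W s \<omega>) \<partial>M)"
    by (intro nn_integral_cmult) measurable
  have e3: "(\<integral>\<^sup>+\<omega>. c * u (W t \<omega> - W s \<omega>) \<partial>M) = c * (\<integral>\<^sup>+\<omega>. u (W t \<omega> - W s \<omega>) \<partial>M)"
    by (intro nn_integral_cmult) measurable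
  show ?case unfolding e1 e2 e3 using mult(4) by (simp add: mult.left_commute)
next
  case (add u v)
  have AM[measurable]: "A \<in> sets M" using setsF'[OF st A] .
  have DM[measurable]: "(\<lambda>\<omega>. W t \<omega> - W s \<omega>) \<in> borel_measurable M" using Dmeas'[OF st] .
  have [measurable]: "u \<in> borel_measurable borel" "v \<in> borel_measurable borel" using add by auto
  have "(\<integral>\<^sup>+\<omega>. indicator A \<omega> * (v (W t \<omega> - W s \<omega>) + u (W t \<omega> - W s \<omega>)) \<partial>M)
     = (\<integral>\<^sup>+\<omega>. indicator A \<omega> * v (W t \<omega> - W s \<omega>) + indicator A \<omega> * u (W t \<omega> - W s \<omega>) \<partial>M)"
    by (simp add: distrib_left)
  also have "\<dots> = (\<integral>\<^sup>+\<omega>. indicator A \<omega> * v (W t \<omega> - W s \<omega>) \<partial>M) + (\<integral>\<^sup>+\<omega>. indicator A \<omega> * u (W t \<omega> - W s \<omega>) \<partial>M)"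
    using AM by (intro nn_integral_add) measurable
  also have "(\<integral>\<^sup>+\<omega>. v (W t \<omega> - W s \<omega>) + u (W t \<omega> - W s \<omega>) \<partial>M)
     = (\<integral>\<^sup>+\<omega>. v (W t \<omega> - W s \<omega>) \<partial>M) + (\<integral>\<^sup>+\<omega>. u (W t \<omega> - W s \<omega>) \<partial>M)"
    by (intro nn_integral_add) measurable
  ultimately show ?case using add by (simp add: distrib_left)
next
  case (seq U)
  have AM[measurable]: "A \<in> sets M" using setsF'[OF st A] .
  have DM[measurable]: "(\<lambda>\<omega>. W t \<omega> - W s \<omega>) \<in> borel_measurable M" using Dmeas'[OF st] .
  have [measurable]: "\<And>i. U i \<in> borel_measurable borel" using seq by auto
  have inc1: "incseq (\<lambda>i \<omega>. indicator A \<omega> * U i (W t \<omega> - W s \<omega>))"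
    using seq(4) by (auto simp: incseq_def le_fun_def intro!: mult_left_mono)
  have inc2: "incseq (\<lambda>i \<omega>. U i (W t \<omega> - W s \<omega>))"
    using seq(4) by (auto simp: incseq_def le_fun_def)
  have "(\<integral>\<^sup>+\<omega>. indicator A \<omega> * (SUP i. U i) (W t \<omega> - W s \<omega>) \<partial>M)
      = (\<integral>\<^sup>+\<omega>. (SUP i. indicator A \<omega> * U i (W t \<omega> - W s \<omega>)) \<partial>M)"
    by (simp add: SUP_mult_left_ennreal image_comp)
  also have "\<dots> = (SUP i. (\<integral>\<^sup>+\<omega>. indicator A \<omega> * U i (W t \<omega> - W s \<omega>) \<partial>M))"
    using AM by (intro nn_integral_monotone_convergence_SUP[OF inc1]) measurable
  also have "\<dots> = (SUP i. emeasure M A * (\<integral>\<^sup>+\<omega>. U i (W t \<omega> - W s \<omega>) \<partial>M))"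
    using seq(3) by simp
  also have "\<dots> = emeasure M A * (SUP i. (\<integral>\<^sup>+\<omega>. U i (W t \<omega> - W s \<omega>) \<partial>M))"
    by (simp add: SUP_mult_left_ennreal image_comp)
  also have "(SUP i. (\<integral>\<^sup>+\<omega>. U i (W t \<omega> - W s \<omega>) \<partial>M)) = (\<integral>\<^sup>+\<omega>. (SUP i. U i (W t \<omega> - W s \<omega>)) \<partial>M)"
    by (intro nn_integral_monotone_convergence_SUP[OF inc2, symmetric]) measurable
  finally show ?case by (simp add: image_comp)
qed


lemma indep_fun_fun:
  fixes f :: "real \<Rightarrow> ennreal" and g :: "'a \<Rightarrow> ennreal"
  assumes st: "0 \<le> s" "s < t" "t \<le> T" and g: "g \<in> borel_measurable (F s)" and f[measurable]: "f \<in> borel_measurable borel"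
  shows "(\<integral>\<^sup>+\<omega>. g \<omega> * f (W t \<omega> - W s \<omega>) \<partial>M) = (\<integral>\<^sup>+\<omega>. g \<omega> \<partial>M) * (\<integral>\<^sup>+\<omega>. f (W t \<omega> - W s \<omega>) \<partial>M)"
  using g
proof (induct rule: borel_measurable_induct)
  case (cong u v)
  have "\<And>x. x \<in> space M \<Longrightarrow> u x = v x" using cong spaceF[of s] st by auto
  then have "(\<integral>\<^sup>+\<omega>. u \<omega> * f (W t \<omega> - W s \<omega>) \<partial>M) = (\<integral>\<^sup>+\<omega>. v \<omega> * f (W t \<omega> - W s \<omega>) \<partial>M)"
      "(\<integral>\<^sup>+\<omega>. u \<omega> \<partial>M) = (\<integral>\<^sup>+\<omega>. v \<omega> \<partial>M)"
    by (auto intro!: nn_integral_cong)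
  then show ?case using cong by simp
next
  case (set A)
  have AM[measurable]: "A \<in> sets M" using setsF'[OF st set] .
  show ?case using indep_set_fun[OF st set f] AM by simp
next
  case (mult u c)
  have DM[measurable]: "(\<lambda>\<omega>. W t \<omega> - W s \<omega>) \<in> borel_measurable M" using Dmeas'[OF st] .
  have um[measurable]: "u \<in> borel_measurable M" using mult measF'[OF st] by blast
  have "(\<integral>\<^sup>+\<omega>. c * u \<omega> * f (W t \<omega> - W s \<omega>) \<partial>M) = (\<integral>\<^sup>+\<omega>. c * (u \<omega> * f (W t \<omega> - W s \<omega>)) \<partial>M)"
    by (simp add: ac_simps)
  also have "\<dots> = c * (\<integral>\<^sup>+\<omega>. u \<omega> * f (W t \<omega> - W s \<omega>) \<partial>M)"
    by (intro nn_integral_cmult) measurable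
  also have "\<dots> = c * ((\<integral>\<^sup>+\<omega>. u \<omega> \<partial>M) * (\<integral>\<^sup>+\<omega>. f (W t \<omega> - W s \<omega>) \<partial>M))" using mult by simp
  also have "(\<integral>\<^sup>+\<omega>. c * u \<omega> \<partial>M) = c * (\<integral>\<^sup>+\<omega>. u \<omega> \<partial>M)"
    by (intro nn_integral_cmult) measurable
  ultimately show ?case by (simp add: ac_simps)
next
  case (add u v)
  have DM[measurable]: "(\<lambda>\<omega>. W t \<omega> - W s \<omega>) \<in> borel_measurable M" using Dmeas'[OF st] .
  have [measurable]: "u \<in> borel_measurable M" "v \<in> borel_measurable M" using add measF'[OF st] by blast+
  have "(\<integral>\<^sup>+\<omega>. (v \<omega> + u \<omega>) * f (W t \<omega> - W s \<omega>) \<partial>M)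
     = (\<integral>\<^sup>+\<omega>. v \<omega> * f (W t \<omega> - W s \<omega>) + u \<omega> * f (W t \<omega> - W s \<omega>) \<partial>M)"
    by (simp add: distrib_right)
  also have "\<dots> = (\<integral>\<^sup>+\<omega>. v \<omega> * f (W t \<omega> - W s \<omega>) \<partial>M) + (\<integral>\<^sup>+\<omega>. u \<omega> * f (W t \<omega> - W s \<omega>) \<partial>M)"
    by (intro nn_integral_add) measurable
  also have "(\<integral>\<^sup>+\<omega>. v \<omega> + u \<omega> \<partial>M) = (\<integral>\<^sup>+\<omega>. v \<omega> \<partial>M) + (\<integral>\<^sup>+\<omega>. u \<omega> \<partial>M)"
    by (intro nn_integral_add) measurable
  ultimately show ?case using add by (simp add: distrib_right)
next
  case (seq U)
  have DM[measurable]: "(\<lambda>\<omega>. W t \<omega> - W s \<omega>) \<in> borel_measurable M" using Dmeas'[OF st] .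
  have [measurable]: "\<And>i. U i \<in> borel_measurable M" using seq measF'[OF st] by blast
  have inc1: "incseq (\<lambda>i \<omega>. U i \<omega> * f (W t \<omega> - W s \<omega>))"
    using seq(4) by (auto simp: incseq_def le_fun_def intro!: mult_right_mono)
  have "(\<integral>\<^sup>+\<omega>. (SUP i. U i) \<omega> * f (W t \<omega> - W s \<omega>) \<partial>M)
      = (\<integral>\<^sup>+\<omega>. (SUP i. U i \<omega> * f (W t \<omega> - W s \<omega>)) \<partial>M)"
    by (simp add: SUP_mult_right_ennreal image_comp)
  also have "\<dots> = (SUP i. (\<integral>\<^sup>+\<omega>. U i \<omega> * f (W t \<omega> - W s \<omega>) \<partial>M))"
    by (intro nn_integral_monotone_convergence_SUP[OF inc1]) measurable
  also have "\<dots> = (SUP i. (\<integral>\<^sup>+\<omega>. U i \<omega> \<partial>M) * (\<integral>\<^sup>+\<omega>. f (W t \<omega> - W s \<omega>) \<partial>M))"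
    using seq(3) by simp
  also have "\<dots> = (SUP i. (\<integral>\<^sup>+\<omega>. U i \<omega> \<partial>M)) * (\<integral>\<^sup>+\<omega>. f (W t \<omega> - W s \<omega>) \<partial>M)"
    by (simp add: SUP_mult_right_ennreal image_comp)
  also have "(SUP i. (\<integral>\<^sup>+\<omega>. U i \<omega> \<partial>M)) = (\<integral>\<^sup>+\<omega>. (SUP i. U i \<omega>) \<partial>M)"
    by (intro nn_integral_monotone_convergence_SUP[OF seq(4), symmetric]) measurable
  finally show ?case by (simp add: image_comp)
qed

definition N :: "real \<Rightarrow> real \<Rightarrow> 'a \<Rightarrow> real" where "N \<theta> t \<omega> = exp (\<theta> * W t \<omega> - (\<theta>^2) * t / 2)"

lemma N_nonneg[simp]: "0 \<le> N \<theta> t \<omega>" by (simp add: N_def)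

lemma N_measF: "0 \<le> t \<Longrightarrow> t \<le> T \<Longrightarrow> N \<theta> t \<in> borel_measurable (F t)"
  unfolding N_def[abs_def] using WmeasF by measurable

lemma mart:
  fixes g :: "'a \<Rightarrow> ennreal"
  assumes s: "0 \<le> s" "s \<le> T" and g[measurable]: "g \<in> borel_measurable (F s)"
  shows "(\<integral>\<^sup>+\<omega>. g \<omega> * ennreal (N \<theta> T \<omega>) \<partial>M) = (\<integral>\<^sup>+\<omega>. g \<omega> * ennreal (N \<theta> s \<omega>) \<partial>M)"
proof (cases "s = T")
  case False
  then have st: "0 \<le> s" "s < T" "T \<le> T" using s by auto
  have WTs[measurable]: "W T \<in> borel_measurable M" "W s \<in> borel_measurable M"
    using Wmeas[of T] Wmeas[of s] st by auto
  define f where "f x = ennreal (exp (\<theta> * x - (\<theta>^2) * (T - s) / 2))" for x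
  have fm[measurable]: "f \<in> borel_measurable borel" unfolding f_def[abs_def] by measurable
  have Nm[measurable]: "N \<theta> s \<in> borel_measurable (F s)" using N_measF s by auto
  have eqN: "N \<theta> T \<omega> = N \<theta> s \<omega> * exp (\<theta> * (W T \<omega> - W s \<omega>) - (\<theta>^2) * (T - s) / 2)" for \<omega>
    unfolding N_def by (simp add: exp_add[symmetric] field_simps)
  have "(\<integral>\<^sup>+\<omega>. g \<omega> * ennreal (N \<theta> T \<omega>) \<partial>M) = (\<integral>\<^sup>+\<omega>. (g \<omega> * ennreal (N \<theta> s \<omega>)) * f (W T \<omega> - W s \<omega>) \<partial>M)"
  proof (intro nn_integral_cong)
    fix \<omega>
    have "ennreal (N \<theta> T \<omega>) = ennreal (N \<theta> s \<omega>) * f (W T \<omega> - W s \<omega>)"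
      unfolding eqN f_def by (rule ennreal_mult) auto
    then show "g \<omega> * ennreal (N \<theta> T \<omega>) = g \<omega> * ennreal (N \<theta> s \<omega>) * f (W T \<omega> - W s \<omega>)"
      by (simp only: mult.assoc)
  qed
  also have "\<dots> = (\<integral>\<^sup>+\<omega>. g \<omega> * ennreal (N \<theta> s \<omega>) \<partial>M) * (\<integral>\<^sup>+\<omega>. f (W T \<omega> - W s \<omega>) \<partial>M)"
    by (rule indep_fun_fun[OF st _ fm]) measurable
  also have "(\<integral>\<^sup>+\<omega>. f (W T \<omega> - W s \<omega>) \<partial>M) = 1"
  proof -
    have "(\<integral>\<^sup>+\<omega>. f (W T \<omega> - W s \<omega>) \<partial>M) = (\<integral>\<^sup>+\<omega>. ennreal (exp (- (\<theta>^2) * (T - s) / 2)) * ennreal (exp (\<theta>* (W T \<omega> - W s \<omega>))) \<partial>M)"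
    proof (intro nn_integral_cong)
      fix \<omega>
      have "exp (\<theta> * (W T \<omega> - W s \<omega>) - (\<theta>^2) * (T - s) / 2) = exp (- (\<theta>^2) * (T - s) / 2) * exp (\<theta> * (W T \<omega> - W s \<omega>))"
        by (simp add: exp_add[symmetric])
      then show "f (W T \<omega> - W s \<omega>) = ennreal (exp (- (\<theta>^2) * (T - s) / 2)) * ennreal (exp (\<theta> * (W T \<omega> - W s \<omega>)))"
        unfolding f_def by (simp only: ennreal_mult[OF exp_ge_zero exp_ge_zero, symmetric])
    qed
    also have "\<dots> = ennreal (exp (- (\<theta>^2) * (T - s) / 2)) * (\<integral>\<^sup>+\<omega>. ennreal (exp (\<theta>* (W T \<omega> - W s \<omega>))) \<partial>M)"
      by (intro nn_integral_cmult) measurable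
    also have "\<dots> = ennreal (exp (- (\<theta>^2) * (T - s) / 2)) * ennreal (exp ((\<theta>^2)* (T-s)/2))"
      using Wexp[OF st] by simp
    also have "\<dots> = ennreal (exp (- (\<theta>^2) * (T - s) / 2) * exp ((\<theta>^2) * (T-s)/2))"
      by (simp only: ennreal_mult[OF exp_ge_zero exp_ge_zero, symmetric])
    also have "\<dots> = 1" by (simp add: exp_add[symmetric])
    finally show ?thesis .
  qed
  finally show ?thesis by simp
qed simp


definition Fmeas :: "('a \<Rightarrow> real) \<Rightarrow> ('a \<Rightarrow> real) \<Rightarrow> bool" where
  "Fmeas \<tau> g \<longleftrightarrow> (\<forall>t\<in>{0..T}. (\<lambda>\<omega>. g \<omega> * indicator {\<omega>\<in>space M. \<tau> \<omega> \<le> t} \<omega>) \<in> borel_measurable (F t))"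

lemma Fmeas_M: assumes "\<tau> \<in> ST" "Fmeas \<tau> g" shows "g \<in> borel_measurable M"
proof -
  have "(\<lambda>\<omega>. g \<omega> * indicator {\<omega>\<in>space M. \<tau> \<omega> \<le> T} \<omega>) \<in> borel_measurable (F T)"
    using assms(2) Tpos unfolding Fmeas_def by auto
  then have m: "(\<lambda>\<omega>. g \<omega> * indicator {\<omega>\<in>space M. \<tau> \<omega> \<le> T} \<omega>) \<in> borel_measurable M"
    using measF[of T] Tpos by auto
  have "\<And>\<omega>. \<omega> \<in> space M \<Longrightarrow> g \<omega> * indicator {\<omega>\<in>space M. \<tau> \<omega> \<le> T} \<omega> = g \<omega>"
    using ST_range[OF assms(1)] by (simp add: indicator_def)
  then show ?thesis using measurable_cong[of M "\<lambda>\<omega>. g \<omega> * indicator {\<omega>\<in>space M. \<tau> \<omega> \<le> T} \<omega>" g] m by simp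
qed

lemma dk_meas: assumes f: "f \<in> borel_measurable G"
  shows "(\<lambda>\<omega>. if dk n (f \<omega>) = j then (1::real) else 0) \<in> borel_measurable G"
proof -
  have "(\<lambda>\<omega>. f \<omega> * 2^n / T) \<in> borel_measurable G"
    using f by (intro borel_measurable_divide borel_measurable_times borel_measurable_const)
  then have "(\<lambda>\<omega>. \<lceil>f \<omega> * 2^n / T\<rceil>) \<in> measurable G (count_space UNIV)"
    by (rule measurable_compose[OF _ measurable_real_ceiling])
  then have k: "(\<lambda>\<omega>. dk n (f \<omega>)) \<in> measurable G (count_space UNIV)"
    unfolding dk_def by (rule measurable_compose) simp
  show ?thesis
    by (rule measurable_compose[OF k, of "\<lambda>k. if k = j then (1::real) else 0"]) simp
qed

lemma disc_os:
  assumes tau: "\<tau> \<in> ST" and gnn: "\<And>\<omega>. \<omega> \<in> space M \<Longrightarrow> 0 \<le> g \<omega>" and Fm: "Fmeas \<tau> g"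
  shows "(\<integral>\<^sup>+\<omega>. ennreal (g \<omega>) * ennreal (N \<theta> T \<omega>) \<partial>M) = (\<integral>\<^sup>+\<omega>. ennreal (g \<omega>) * ennreal (N \<theta> (dg n (\<tau> \<omega>)) \<omega>) \<partial>M)"
proof -
  define K where "K = {..(2::nat)^n}"
  define tj where "tj j = real j * T / 2^n" for j :: nat
  define h where "h j \<omega> = ennreal (if dk n (\<tau> \<omega>) = j then g \<omega> else 0)" for j \<omega>
  have tj: "j \<in> K \<Longrightarrow> 0 \<le> tj j \<and> tj j \<le> T" for j
  proof -
    assume "j \<in> K"
    then have "real j \<le> 2^n" unfolding K_def by (simp add: of_nat_le_iff[symmetric])
    then have "real j * T / 2^n \<le> 2^n * T / 2^n" using Tpos by (intro divide_right_mono mult_right_mono) auto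
    then show ?thesis using Tpos by (simp add: tj_def)
  qed
  have hF: "h j \<in> borel_measurable (F (tj j))" if j: "j \<in> K" for j
  proof -
    have eq: "h j \<omega> = ennreal ((g \<omega> * indicator {\<omega>\<in>space M. \<tau> \<omega> \<le> tj j} \<omega>) * (if dk n (min (\<tau> \<omega>) (tj j)) = j then 1 else 0))"
      if \<omega>: "\<omega> \<in> space (F (tj j))" for \<omega>
    proof -
      have om: "\<omega> \<in> space M" using \<omega> spaceF tj[OF j] by auto
      have "dk n (\<tau> \<omega>) = j \<Longrightarrow> \<tau> \<omega> \<le> tj j"
        using dg_ge[of "\<tau> \<omega>" n] ST_range[OF tau om] by (auto simp: dg_def tj_def)
      then show ?thesis using om unfolding h_def by (auto split: split_indicator simp: min_def)
    qed
    have m1: "(\<lambda>\<omega>. g \<omega> * indicator {\<omega>\<in>space M. \<tau> \<omega> \<le> tj j} \<omega>) \<in> borel_measurable (F (tj j))"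
      using Fm tj[OF j] unfolding Fmeas_def by auto
    have m2: "(\<lambda>\<omega>. if dk n (min (\<tau> \<omega>) (tj j)) = j then (1::real) else 0) \<in> borel_measurable (F (tj j))"
      using dk_meas ST_min_meas[OF tau] tj[OF j] by blast
    show ?thesis
      by (rule measurable_cong[THEN iffD2, OF eq]) (use m1 m2 in measurable)
  qed
  have hM[measurable]: "j \<in> K \<Longrightarrow> h j \<in> borel_measurable M" for j
    using hF tj measF by blast
  have NM[measurable]: "j \<in> K \<Longrightarrow> N \<theta> (tj j) \<in> borel_measurable M" for j
    using N_measF tj measF by blast
  have NTM[measurable]: "N \<theta> T \<in> borel_measurable M" using N_measF[of T] measF[of T] Tpos by auto
  have dkK: "\<omega> \<in> space M \<Longrightarrow> dk n (\<tau> \<omega>) \<in> K" for \<omega>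
    using dk_le ST_range[OF tau] by (auto simp: K_def)
  have e1: "ennreal (g \<omega>) * ennreal (N \<theta> T \<omega>) = (\<Sum>j\<in>K. h j \<omega> * ennreal (N \<theta> T \<omega>))" if "\<omega> \<in> space M" for \<omega>
  proof -
    have "(\<Sum>j\<in>K. h j \<omega> * ennreal (N \<theta> T \<omega>)) = (\<Sum>j\<in>K. if dk n (\<tau> \<omega>) = j then ennreal (g \<omega>) * ennreal (N \<theta> T \<omega>) else 0)"
      unfolding h_def by (intro sum.cong) auto
    also have "\<dots> = ennreal (g \<omega>) * ennreal (N \<theta> T \<omega>)"
      using dkK[OF that] by (simp add: K_def)
    finally show ?thesis by simp
  qed
  have e2: "ennreal (g \<omega>) * ennreal (N \<theta> (dg n (\<tau> \<omega>)) \<omega>) = (\<Sum>j\<in>K. h j \<omega> * ennreal (N \<theta> (tj j) \<omega>))" if "\<omega> \<in> space M" for \<omega>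
  proof -
    have "(\<Sum>j\<in>K. h j \<omega> * ennreal (N \<theta> (tj j) \<omega>)) = (\<Sum>j\<in>K. if dk n (\<tau> \<omega>) = j then ennreal (g \<omega>) * ennreal (N \<theta> (tj j) \<omega>) else 0)"
      unfolding h_def by (intro sum.cong) auto
    also have "\<dots> = ennreal (g \<omega>) * ennreal (N \<theta> (tj (dk n (\<tau> \<omega>))) \<omega>)"
      using dkK[OF that] by (simp add: K_def)
    finally show ?thesis by (simp add: tj_def dg_def)
  qed
  have "(\<integral>\<^sup>+\<omega>. ennreal (g \<omega>) * ennreal (N \<theta> T \<omega>) \<partial>M) = (\<integral>\<^sup>+\<omega>. (\<Sum>j\<in>K. h j \<omega> * ennreal (N \<theta> T \<omega>)) \<partial>M)"
    by (intro nn_integral_cong) (simp add: e1)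
  also have "\<dots> = (\<Sum>j\<in>K. (\<integral>\<^sup>+\<omega>. h j \<omega> * ennreal (N \<theta> T \<omega>) \<partial>M))"
    by (intro nn_integral_sum) measurable
  also have "\<dots> = (\<Sum>j\<in>K. (\<integral>\<^sup>+\<omega>. h j \<omega> * ennreal (N \<theta> (tj j) \<omega>) \<partial>M))"
    by (intro sum.cong refl mart) (use tj hF in auto)
  also have "\<dots> = (\<integral>\<^sup>+\<omega>. (\<Sum>j\<in>K. h j \<omega> * ennreal (N \<theta> (tj j) \<omega>)) \<partial>M)"
    by (intro nn_integral_sum[symmetric]) measurable
  also have "\<dots> = (\<integral>\<^sup>+\<omega>. ennreal (g \<omega>) * ennreal (N \<theta> (dg n (\<tau> \<omega>)) \<omega>) \<partial>M)"
    by (intro nn_integral_cong) (simp add: e2)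
  finally show ?thesis .
qed


lemma ui_lim:
  fixes f :: "nat \<Rightarrow> 'a \<Rightarrow> real" and f' :: "'a \<Rightarrow> real"
  assumes meas[measurable]: "\<And>n. f n \<in> borel_measurable M" and meas'[measurable]: "f' \<in> borel_measurable M"
    and nn: "\<And>n \<omega>. \<omega> \<in> space M \<Longrightarrow> 0 \<le> f n \<omega>"
    and lim: "\<And>\<omega>. \<omega> \<in> space M \<Longrightarrow> (\<lambda>n. f n \<omega>) \<longlonglongrightarrow> f' \<omega>"
    and sq0: "\<And>n. (\<integral>\<^sup>+\<omega>. ennreal ((f n \<omega>)^2) \<partial>M) \<le> ennreal C0"
    and eq: "\<And>n. (\<integral>\<^sup>+\<omega>. ennreal (f n \<omega>) \<partial>M) = L"
  shows "(\<integral>\<^sup>+\<omega>. ennreal (f' \<omega>) \<partial>M) = L"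
proof (rule antisym)
  have "(\<integral>\<^sup>+\<omega>. ennreal (f' \<omega>) \<partial>M) = (\<integral>\<^sup>+\<omega>. liminf (\<lambda>n. ennreal (f n \<omega>)) \<partial>M)"
  proof (intro nn_integral_cong)
    fix \<omega> assume "\<omega> \<in> space M"
    then have "(\<lambda>n. ennreal (f n \<omega>)) \<longlonglongrightarrow> ennreal (f' \<omega>)"
      using lim by (intro tendsto_ennrealI)
    then show "ennreal (f' \<omega>) = liminf (\<lambda>n. ennreal (f n \<omega>))"
      by (simp add: lim_imp_Liminf)
  qed
  also have "\<dots> \<le> liminf (\<lambda>n. (\<integral>\<^sup>+\<omega>. ennreal (f n \<omega>) \<partial>M))"
    by (intro nn_integral_liminf) measurable
  also have "\<dots> = L" by (simp add: eq Liminf_const)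
  finally show "(\<integral>\<^sup>+\<omega>. ennreal (f' \<omega>) \<partial>M) \<le> L" .
next
  interpret P: prob_space M by (rule PS)
  define C where "C = max C0 0"
  have C0: "0 \<le> C" unfolding C_def by simp
  have sq: "(\<integral>\<^sup>+\<omega>. ennreal ((f n \<omega>)^2) \<partial>M) \<le> ennreal C" for n
    using sq0[of n] ennreal_leI[of C0 C] unfolding C_def by (meson max.cobounded1 order.trans)
  have main: "L \<le> (\<integral>\<^sup>+\<omega>. ennreal (f' \<omega>) \<partial>M) + ennreal (C / K)" if K: "0 < K" for K
  proof -
    define u where "u n \<omega> = ennreal (min (f n \<omega>) K)" for n \<omega>
    define u' where "u' \<omega> = ennreal (min (f' \<omega>) K)" for \<omega>
    have [measurable]: "u n \<in> borel_measurable M" "u' \<in> borel_measurable M" for n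
      unfolding u_def[abs_def] u'_def[abs_def] by measurable
    have conv: "(\<lambda>n. (\<integral>\<^sup>+\<omega>. u n \<omega> \<partial>M)) \<longlonglongrightarrow> (\<integral>\<^sup>+\<omega>. u' \<omega> \<partial>M)"
    proof (rule nn_integral_dominated_convergence[where w="\<lambda>_. ennreal K"])
      have "(\<integral>\<^sup>+x. ennreal K \<partial>M) = ennreal K * emeasure M (space M)" by (rule nn_integral_const)
      then show "(\<integral>\<^sup>+x. ennreal K \<partial>M) < \<infinity>" using P.emeasure_space_1 by simp
      show "AE x in M. u j x \<le> ennreal K" for j
        unfolding u_def by (intro AE_I2 ennreal_leI) simp
      show "AE x in M. (\<lambda>i. u i x) \<longlonglongrightarrow> u' x"
      proof (rule AE_I2)
        fix x assume x: "x \<in> space M"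
        have "(\<lambda>i. min (f i x) K) \<longlonglongrightarrow> min (f' x) K"
          by (rule tendsto_min[OF lim[OF x] tendsto_const])
        then show "(\<lambda>i. u i x) \<longlonglongrightarrow> u' x" unfolding u_def u'_def by (rule tendsto_ennrealI)
      qed
    qed measurable
    have bnd: "L \<le> (\<integral>\<^sup>+\<omega>. u n \<omega> \<partial>M) + ennreal (C / K)" for n
    proof -
      have pt: "ennreal (f n \<omega>) \<le> u n \<omega> + ennreal (1/K) * ennreal ((f n \<omega>)^2)" if "\<omega> \<in> space M" for \<omega>
      proof -
        have "f n \<omega> \<le> min (f n \<omega>) K + (1/K) * (f n \<omega>)^2"
        proof (cases "f n \<omega> \<le> K")
          case True
          have "0 \<le> (1/K) * (f n \<omega>)^2" using K by simp
          then show ?thesis using True by simp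
        next
          case False
          then have "K * f n \<omega> \<le> f n \<omega> * f n \<omega>" using K by (intro mult_right_mono) auto
          then have "f n \<omega> \<le> (1/K) * (f n \<omega>)^2" using K by (simp add: field_simps power2_eq_square)
          then show ?thesis using False K by simp
        qed
        then have "ennreal (f n \<omega>) \<le> ennreal (min (f n \<omega>) K + (1/K) * (f n \<omega>)^2)"
          by (rule ennreal_leI)
        also have "\<dots> = ennreal (min (f n \<omega>) K) + ennreal ((1/K) * (f n \<omega>)^2)"
          using K nn[OF that] by (intro ennreal_plus) auto
        also have "ennreal ((1/K) * (f n \<omega>)^2) = ennreal (1/K) * ennreal ((f n \<omega>)^2)"
          using K by (intro ennreal_mult) auto
        finally show ?thesis unfolding u_def .
      qed
      have "L = (\<integral>\<^sup>+\<omega>. ennreal (f n \<omega>) \<partial>M)" using eq by simp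
      also have "\<dots> \<le> (\<integral>\<^sup>+\<omega>. u n \<omega> + ennreal (1/K) * ennreal ((f n \<omega>)^2) \<partial>M)"
        by (intro nn_integral_mono pt)
      also have "\<dots> = (\<integral>\<^sup>+\<omega>. u n \<omega> \<partial>M) + (\<integral>\<^sup>+\<omega>. ennreal (1/K) * ennreal ((f n \<omega>)^2) \<partial>M)"
        by (rule nn_integral_add) measurable
      also have "(\<integral>\<^sup>+\<omega>. ennreal (1/K) * ennreal ((f n \<omega>)^2) \<partial>M) = ennreal (1/K) * (\<integral>\<^sup>+\<omega>. ennreal ((f n \<omega>)^2) \<partial>M)"
        by (rule nn_integral_cmult) measurable
      also have "ennreal (1/K) * (\<integral>\<^sup>+\<omega>. ennreal ((f n \<omega>)^2) \<partial>M) \<le> ennreal (1/K) * ennreal C"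
        by (rule mult_left_mono[OF sq]) simp
      also have "ennreal (1/K) * ennreal C = ennreal (C / K)"
        using K C0 by (subst ennreal_mult[symmetric]) auto
      finally show ?thesis by (simp add: add_left_mono)
    qed
    have "L \<le> (\<integral>\<^sup>+\<omega>. u' \<omega> \<partial>M) + ennreal (C / K)"
      by (rule LIMSEQ_le_const[OF tendsto_add[OF conv tendsto_const]]) (use bnd in auto)
    also have "(\<integral>\<^sup>+\<omega>. u' \<omega> \<partial>M) \<le> (\<integral>\<^sup>+\<omega>. ennreal (f' \<omega>) \<partial>M)"
      unfolding u'_def by (intro nn_integral_mono ennreal_leI) simp
    finally show ?thesis by (simp add: add_right_mono)
  qed
  show "L \<le> (\<integral>\<^sup>+\<omega>. ennreal (f' \<omega>) \<partial>M)"
  proof (rule ennreal_le_epsilon)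
    fix e :: real assume e: "0 < e"
    define K where "K = (C + 1) / e"
    have K: "0 < K" using e C0 by (simp add: K_def)
    have CK: "C / K \<le> e" using e C0 by (simp add: K_def field_simps)
    have "L \<le> (\<integral>\<^sup>+\<omega>. ennreal (f' \<omega>) \<partial>M) + ennreal (C / K)" using main[OF K] .
    also have "\<dots> \<le> (\<integral>\<^sup>+\<omega>. ennreal (f' \<omega>) \<partial>M) + ennreal e"
      using CK by (intro add_left_mono ennreal_leI)
    finally show "L \<le> (\<integral>\<^sup>+\<omega>. ennreal (f' \<omega>) \<partial>M) + ennreal e" .
  qed
qed


lemma meas_eq: assumes "f \<in> measurable G H" "\<And>w. w \<in> space G \<Longrightarrow> f w = g w"
  shows "g \<in> measurable G H"
  using measurable_cong[of G f g H] assms by simp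

lemma Wcomp_meas:
  assumes tau: "\<tau> \<in> ST" and t: "0 \<le> t" "t \<le> T"
  shows "(\<lambda>\<omega>. W (min (dg n (min (\<tau> \<omega>) t)) t) \<omega>) \<in> borel_measurable (F t)"
proof -
  define K where "K = {..(2::nat)^n}"
  define tj where "tj j = min (real j * T / 2^n) t" for j :: nat
  have tj: "0 \<le> tj j" "tj j \<le> t" for j using t Tpos by (auto simp: tj_def)
  have m: "(\<lambda>\<omega>. min (\<tau> \<omega>) t) \<in> borel_measurable (F t)" by (rule ST_min_meas[OF tau t])
  have sp: "space (F t) = space M" using spaceF t by blast
  have eq: "W (min (dg n (min (\<tau> \<omega>) t)) t) \<omega> = (\<Sum>j\<in>K. (if dk n (min (\<tau> \<omega>) t) = j then 1 else 0) * W (tj j) \<omega>)"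
    if \<omega>: "\<omega> \<in> space (F t)" for \<omega>
  proof -
    have om: "\<omega> \<in> space M" using \<omega> sp by simp
    have r: "0 \<le> min (\<tau> \<omega>) t" "min (\<tau> \<omega>) t \<le> T" using ST_range[OF tau om] t by auto
    have inK: "dk n (min (\<tau> \<omega>) t) \<in> K" using dk_le[OF r] by (simp add: K_def)
    have "(\<Sum>j\<in>K. (if dk n (min (\<tau> \<omega>) t) = j then 1 else 0) * W (tj j) \<omega>)
        = (\<Sum>j\<in>K. if dk n (min (\<tau> \<omega>) t) = j then W (tj j) \<omega> else 0)"
      by (intro sum.cong) auto
    also have "\<dots> = W (tj (dk n (min (\<tau> \<omega>) t))) \<omega>"
      using inK by (simp add: K_def)
    finally show ?thesis by (simp add: tj_def dg_def)
  qed
  have terms: "(\<lambda>\<omega>. (if dk n (min (\<tau> \<omega>) t) = j then 1 else 0) * W (tj j) \<omega>) \<in> borel_measurable (F t)" for j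
  proof -
    have "W (tj j) \<in> borel_measurable (F (tj j))" using WmeasF tj[of j] t by auto
    then have "W (tj j) \<in> borel_measurable (F t)" using measF_mono[OF tj(1) tj(2) t(2)] by blast
    then show ?thesis using dk_meas[OF m, of n j] by (intro borel_measurable_times)
  qed
  have "(\<lambda>\<omega>. \<Sum>j\<in>K. (if dk n (min (\<tau> \<omega>) t) = j then 1 else 0) * W (tj j) \<omega>) \<in> borel_measurable (F t)"
    using terms by (intro borel_measurable_sum) auto
  then show ?thesis by (rule meas_eq) (simp add: eq)
qed

lemma Wmin_meas:
  assumes tau: "\<tau> \<in> ST" and t: "0 \<le> t" "t \<le> T"
  shows "(\<lambda>\<omega>. W (min (\<tau> \<omega>) t) \<omega>) \<in> borel_measurable (F t)"
proof (rule borel_measurable_LIMSEQ_real[OF _ Wcomp_meas[OF tau t]])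
  fix \<omega> assume "\<omega> \<in> space (F t)"
  then have om: "\<omega> \<in> space M" using spaceF t by blast
  have r: "0 \<le> min (\<tau> \<omega>) t" "min (\<tau> \<omega>) t \<le> T" using ST_range[OF tau om] t by auto
  have l1: "(\<lambda>n. min (dg n (min (\<tau> \<omega>) t)) t) \<longlonglongrightarrow> min (min (\<tau> \<omega>) t) t"
    by (intro tendsto_min dg_lim[OF r(1)] tendsto_const)
  have inS: "min (dg n (min (\<tau> \<omega>) t)) t \<in> {0..T}" for n
    using dg_ge[OF r(1), of n] r t by auto
  have "(\<lambda>n. W (min (dg n (min (\<tau> \<omega>) t)) t) \<omega>) \<longlonglongrightarrow> W (min (min (\<tau> \<omega>) t) t) \<omega>"
    using continuous_on_tendsto_compose[OF Wcont[OF om] l1] r inS by auto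
  then show "(\<lambda>n. W (min (dg n (min (\<tau> \<omega>) t)) t) \<omega>) \<longlonglongrightarrow> W (min (\<tau> \<omega>) t) \<omega>" by simp
qed

lemma Wtau_meas: assumes tau: "\<tau> \<in> ST" shows "(\<lambda>\<omega>. W (\<tau> \<omega>) \<omega>) \<in> borel_measurable M"
proof -
  have "(\<lambda>\<omega>. W (min (\<tau> \<omega>) T) \<omega>) \<in> borel_measurable M"
    using Wmin_meas[OF tau, of T] measF[of T] Tpos by auto
  moreover have eq: "\<And>\<omega>. \<omega> \<in> space M \<Longrightarrow> W (min (\<tau> \<omega>) T) \<omega> = W (\<tau> \<omega>) \<omega>"
    using ST_range[OF tau] by (simp add: min_absorb1)
  ultimately show ?thesis by (rule meas_eq)
qed

lemma Wdg_meas: assumes tau: "\<tau> \<in> ST" shows "(\<lambda>\<omega>. W (dg n (\<tau> \<omega>)) \<omega>) \<in> borel_measurable M"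
proof -
  have "(\<lambda>\<omega>. W (min (dg n (min (\<tau> \<omega>) T)) T) \<omega>) \<in> borel_measurable M"
    using Wcomp_meas[OF tau, of T] measF[of T] Tpos by auto
  moreover have eq: "\<And>\<omega>. \<omega> \<in> space M \<Longrightarrow> W (min (dg n (min (\<tau> \<omega>) T)) T) \<omega> = W (dg n (\<tau> \<omega>)) \<omega>"
  proof -
    fix \<omega> assume om: "\<omega> \<in> space M"
    have r: "0 \<le> \<tau> \<omega>" "\<tau> \<omega> \<le> T" using ST_range[OF tau om] by auto
    show "W (min (dg n (min (\<tau> \<omega>) T)) T) \<omega> = W (dg n (\<tau> \<omega>)) \<omega>"
      using dg_le[OF r] r by (simp add: min_absorb1)
  qed
  ultimately show ?thesis by (rule meas_eq)
qed


lemma dk_meas2: assumes f: "f \<in> borel_measurable G"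
  shows "(\<lambda>\<omega>. dk n (f \<omega>)) \<in> measurable G (count_space UNIV)"
proof -
  have "(\<lambda>\<omega>. f \<omega> * 2^n / T) \<in> borel_measurable G"
    using f by (intro borel_measurable_divide borel_measurable_times borel_measurable_const)
  then have "(\<lambda>\<omega>. \<lceil>f \<omega> * 2^n / T\<rceil>) \<in> measurable G (count_space UNIV)"
    by (rule measurable_compose[OF _ measurable_real_ceiling])
  then show ?thesis unfolding dk_def by (rule measurable_compose) simp
qed

lemma dg_meas: assumes f: "f \<in> borel_measurable G"
  shows "(\<lambda>\<omega>. dg n (f \<omega>)) \<in> borel_measurable G"
  unfolding dg_def
  by (rule measurable_compose[OF dk_meas2[OF f], of "\<lambda>k. real k * T / 2^n"]) simp

lemma Nrho_meas: assumes [measurable]: "\<rho> \<in> borel_measurable M" "(\<lambda>\<omega>. W (\<rho> \<omega>) \<omega>) \<in> borel_measurable M"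
  shows "(\<lambda>\<omega>. N \<theta> (\<rho> \<omega>) \<omega>) \<in> borel_measurable M"
  unfolding N_def by measurable

lemma N_int1: "(\<integral>\<^sup>+\<omega>. ennreal (N \<theta> T \<omega>) \<partial>M) = 1"
proof -
  interpret P: prob_space M by (rule PS)
  have "(\<integral>\<^sup>+\<omega>. ennreal 1 * ennreal (N \<theta> T \<omega>) \<partial>M) = (\<integral>\<^sup>+\<omega>. ennreal 1 * ennreal (N \<theta> 0 \<omega>) \<partial>M)"
    by (rule mart) (use Tpos in auto)
  also have "\<dots> = (\<integral>\<^sup>+\<omega>. ennreal 1 \<partial>M)"
    by (intro nn_integral_cong) (simp add: N_def W0)
  also have "\<dots> = 1" using P.emeasure_space_1 by simp
  finally show ?thesis by simp
qed

lemma Fmeas_one: assumes tau: "\<tau> \<in> ST" shows "Fmeas \<tau> (\<lambda>_. 1)"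
  unfolding Fmeas_def
proof
  fix t assume t: "t \<in> {0..T}"
  have "{\<omega>\<in>space M. \<tau> \<omega> \<le> t} \<in> sets (F t)" using ST_set[OF tau] t by auto
  then have "(indicator {\<omega>\<in>space M. \<tau> \<omega> \<le> t} :: 'a \<Rightarrow> real) \<in> borel_measurable (F t)"
    by (rule borel_measurable_indicator)
  then show "(\<lambda>\<omega>. (1::real) * indicator {\<omega>\<in>space M. \<tau> \<omega> \<le> t} \<omega>) \<in> borel_measurable (F t)"
    by simp
qed

lemma core_bdd:
  assumes tau: "\<tau> \<in> ST" and gnn: "\<And>\<omega>. \<omega> \<in> space M \<Longrightarrow> 0 \<le> g \<omega>"
    and gb: "\<And>\<omega>. \<omega> \<in> space M \<Longrightarrow> g \<omega> \<le> G" and Fm: "Fmeas \<tau> g"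
  shows "(\<integral>\<^sup>+\<omega>. ennreal (g \<omega>) * ennreal (N \<theta> T \<omega>) \<partial>M) = (\<integral>\<^sup>+\<omega>. ennreal (g \<omega>) * ennreal (N \<theta> (\<tau> \<omega>) \<omega>) \<partial>M)"
proof -
  define L where "L = (\<integral>\<^sup>+\<omega>. ennreal (g \<omega>) * ennreal (N \<theta> T \<omega>) \<partial>M)"
  define f where "f n \<omega> = g \<omega> * N \<theta> (dg n (\<tau> \<omega>)) \<omega>" for n \<omega>
  define f' where "f' \<omega> = g \<omega> * N \<theta> (\<tau> \<omega>) \<omega>" for \<omega>
  have gm[measurable]: "g \<in> borel_measurable M" by (rule Fmeas_M[OF tau Fm])
  have taum[measurable]: "\<tau> \<in> borel_measurable M" by (rule ST_meas[OF tau])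
  have dgm[measurable]: "(\<lambda>\<omega>. dg n (\<tau> \<omega>)) \<in> borel_measurable M" for n by (rule dg_meas[OF taum])
  have N1: "(\<lambda>\<omega>. N \<theta>' (\<tau> \<omega>) \<omega>) \<in> borel_measurable M" for \<theta>'
    by (rule Nrho_meas[OF taum Wtau_meas[OF tau]])
  have N2: "(\<lambda>\<omega>. N \<theta>' (dg n (\<tau> \<omega>)) \<omega>) \<in> borel_measurable M" for \<theta>' n
    by (rule Nrho_meas[OF dgm Wdg_meas[OF tau]])
  have fm: "f n \<in> borel_measurable M" for n unfolding f_def[abs_def] using N2 by measurable
  have f'm: "f' \<in> borel_measurable M" unfolding f'_def[abs_def] using N1 by measurable
  have fnn: "\<omega> \<in> space M \<Longrightarrow> 0 \<le> f n \<omega>" for n \<omega> using gnn by (simp add: f_def)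
  have lim: "(\<lambda>n. f n \<omega>) \<longlonglongrightarrow> f' \<omega>" if om: "\<omega> \<in> space M" for \<omega>
  proof -
    have r: "0 \<le> \<tau> \<omega>" "\<tau> \<omega> \<le> T" using ST_range[OF tau om] by auto
    have inS: "dg n (\<tau> \<omega>) \<in> {0..T}" for n using dg_ge[OF r(1), of n] dg_le[OF r] r by auto
    have lW: "(\<lambda>n. W (dg n (\<tau> \<omega>)) \<omega>) \<longlonglongrightarrow> W (\<tau> \<omega>) \<omega>"
      using continuous_on_tendsto_compose[OF Wcont[OF om] dg_lim[OF r(1)]] r inS by auto
    have "(\<lambda>n. g \<omega> * exp (\<theta> * W (dg n (\<tau> \<omega>)) \<omega> - (\<theta>^2) * dg n (\<tau> \<omega>) / 2))
        \<longlonglongrightarrow> g \<omega> * exp (\<theta> * W (\<tau> \<omega>) \<omega> - (\<theta>^2) * \<tau> \<omega> / 2)"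
      by (intro tendsto_intros lW dg_lim[OF r(1)]) simp
    then show ?thesis by (simp add: f_def f'_def N_def)
  qed
  define c where "c = G^2 * exp ((\<theta>^2) * T)"
  have sq: "(\<integral>\<^sup>+\<omega>. ennreal ((f n \<omega>)^2) \<partial>M) \<le> ennreal c" for n
  proof -
    have pt: "ennreal ((f n \<omega>)^2) \<le> ennreal c * ennreal (N (2 * \<theta>) (dg n (\<tau> \<omega>)) \<omega>)" if om: "\<omega> \<in> space M" for \<omega>
    proof -
      have r: "0 \<le> \<tau> \<omega>" "\<tau> \<omega> \<le> T" using ST_range[OF tau om] by auto
      define \<rho> where "\<rho> = dg n (\<tau> \<omega>)"
      have rT: "\<rho> \<le> T" unfolding \<rho>_def by (rule dg_le[OF r])
      have "(N \<theta> \<rho> \<omega>)^2 = N (2 * \<theta>) \<rho> \<omega> * exp ((\<theta>^2) * \<rho>)"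
        unfolding N_def by (simp add: power2_eq_square exp_add[symmetric] algebra_simps)
      also have "\<dots> \<le> N (2 * \<theta>) \<rho> \<omega> * exp ((\<theta>^2) * T)"
      proof -
        have "(\<theta>^2) * \<rho> \<le> (\<theta>^2) * T" using rT by (intro mult_left_mono) auto
        then show ?thesis by (intro mult_left_mono) auto
      qed
      finally have a: "(N \<theta> \<rho> \<omega>)^2 \<le> N (2 * \<theta>) \<rho> \<omega> * exp ((\<theta>^2) * T)" .
      have b: "(g \<omega>)^2 \<le> G^2" using gnn[OF om] gb[OF om] by (intro power_mono) auto
      have "(f n \<omega>)^2 = (g \<omega>)^2 * (N \<theta> \<rho> \<omega>)^2" by (simp add: f_def \<rho>_def power_mult_distrib)
      also have "\<dots> \<le> G^2 * (N (2 * \<theta>) \<rho> \<omega> * exp ((\<theta>^2) * T))"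
        using a b by (intro mult_mono) auto
      also have "\<dots> = c * N (2 * \<theta>) \<rho> \<omega>" by (simp add: c_def)
      finally have "(f n \<omega>)^2 \<le> c * N (2 * \<theta>) \<rho> \<omega>" .
      then have "ennreal ((f n \<omega>)^2) \<le> ennreal (c * N (2 * \<theta>) \<rho> \<omega>)" by (rule ennreal_leI)
      also have "\<dots> = ennreal c * ennreal (N (2 * \<theta>) \<rho> \<omega>)" by (rule ennreal_mult) (auto simp: c_def)
      finally show ?thesis unfolding \<rho>_def .
    qed
    have "(\<integral>\<^sup>+\<omega>. ennreal ((f n \<omega>)^2) \<partial>M) \<le> (\<integral>\<^sup>+\<omega>. ennreal c * ennreal (N (2 * \<theta>) (dg n (\<tau> \<omega>)) \<omega>) \<partial>M)"
      by (intro nn_integral_mono pt)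
    also have "\<dots> = ennreal c * (\<integral>\<^sup>+\<omega>. ennreal (N (2 * \<theta>) (dg n (\<tau> \<omega>)) \<omega>) \<partial>M)"
      using N2 by (intro nn_integral_cmult) measurable
    also have "(\<integral>\<^sup>+\<omega>. ennreal (N (2 * \<theta>) (dg n (\<tau> \<omega>)) \<omega>) \<partial>M) = 1"
    proof -
      have "(\<integral>\<^sup>+\<omega>. ennreal 1 * ennreal (N (2 * \<theta>) T \<omega>) \<partial>M) = (\<integral>\<^sup>+\<omega>. ennreal 1 * ennreal (N (2 * \<theta>) (dg n (\<tau> \<omega>)) \<omega>) \<partial>M)"
        by (rule disc_os[OF tau _ Fmeas_one[OF tau]]) simp
      then show ?thesis using N_int1[of "2 * \<theta>"] by simp
    qed
    finally show ?thesis by simp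
  qed
  have eq: "(\<integral>\<^sup>+\<omega>. ennreal (f n \<omega>) \<partial>M) = L" for n
  proof -
    have "(\<integral>\<^sup>+\<omega>. ennreal (f n \<omega>) \<partial>M) = (\<integral>\<^sup>+\<omega>. ennreal (g \<omega>) * ennreal (N \<theta> (dg n (\<tau> \<omega>)) \<omega>) \<partial>M)"
      by (intro nn_integral_cong) (simp add: f_def ennreal_mult gnn)
    also have "\<dots> = L" unfolding L_def by (rule disc_os[OF tau gnn Fm, symmetric])
    finally show ?thesis .
  qed
  have "(\<integral>\<^sup>+\<omega>. ennreal (f' \<omega>) \<partial>M) = L"
    by (rule ui_lim[OF fm f'm fnn lim sq eq])
  moreover have "(\<integral>\<^sup>+\<omega>. ennreal (f' \<omega>) \<partial>M) = (\<integral>\<^sup>+\<omega>. ennreal (g \<omega>) * ennreal (N \<theta> (\<tau> \<omega>) \<omega>) \<partial>M)"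
    by (intro nn_integral_cong) (simp add: f'_def ennreal_mult gnn)
  ultimately show ?thesis unfolding L_def by simp
qed


lemma min_real_lim: "(\<lambda>k::nat. min a (real k)) \<longlonglongrightarrow> a"
proof (rule tendsto_eventually)
  have "\<forall>k\<ge>nat \<lceil>a\<rceil>. min a (real k) = a"
  proof (intro allI impI)
    fix k assume "nat \<lceil>a\<rceil> \<le> k"
    then have "real (nat \<lceil>a\<rceil>) \<le> real k" by simp
    moreover have "a \<le> real (nat \<lceil>a\<rceil>)" by linarith
    ultimately show "min a (real k) = a" by simp
  qed
  then show "\<forall>\<^sub>F k in sequentially. min a (real k) = a"
    using eventually_sequentially by blast
qed

lemma Fmeas_min: assumes tau: "\<tau> \<in> ST" and Fm: "Fmeas \<tau> g" and c: "0 \<le> c"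
  shows "Fmeas \<tau> (\<lambda>\<omega>. min (g \<omega>) c)"
  unfolding Fmeas_def
proof
  fix t assume t: "t \<in> {0..T}"
  have S: "{\<omega>\<in>space M. \<tau> \<omega> \<le> t} \<in> sets (F t)" using ST_set[OF tau] t by auto
  have m1: "(\<lambda>\<omega>. g \<omega> * indicator {\<omega>\<in>space M. \<tau> \<omega> \<le> t} \<omega>) \<in> borel_measurable (F t)"
    using Fm t unfolding Fmeas_def by blast
  have m2: "(\<lambda>\<omega>. c * indicator {\<omega>\<in>space M. \<tau> \<omega> \<le> t} \<omega>) \<in> borel_measurable (F t)"
    using borel_measurable_indicator[OF S] by (intro borel_measurable_times borel_measurable_const) auto
  have "(\<lambda>\<omega>. min (g \<omega> * indicator {\<omega>\<in>space M. \<tau> \<omega> \<le> t} \<omega>) (c * indicator {\<omega>\<in>space M. \<tau> \<omega> \<le> t} \<omega>)) \<in> borel_measurable (F t)"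
    using m2 m1 by (rule borel_measurable_min)
  then show "(\<lambda>\<omega>. min (g \<omega>) c * indicator {\<omega>\<in>space M. \<tau> \<omega> \<le> t} \<omega>) \<in> borel_measurable (F t)"
    by (rule meas_eq) (simp add: indicator_def)
qed

lemma core:
  assumes tau: "\<tau> \<in> ST" and gnn: "\<And>\<omega>. \<omega> \<in> space M \<Longrightarrow> 0 \<le> g \<omega>" and Fm: "Fmeas \<tau> g"
  shows "(\<integral>\<^sup>+\<omega>. ennreal (g \<omega>) * ennreal (N \<theta> T \<omega>) \<partial>M) = (\<integral>\<^sup>+\<omega>. ennreal (g \<omega>) * ennreal (N \<theta> (\<tau> \<omega>) \<omega>) \<partial>M)"
proof -
  define h where "h k x = ennreal (min (g x) (real k) * N \<theta> T x)" for k :: nat and x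
  define h' where "h' k x = ennreal (min (g x) (real k) * N \<theta> (\<tau> x) x)" for k :: nat and x
  have gm[measurable]: "g \<in> borel_measurable M" by (rule Fmeas_M[OF tau Fm])
  have taum[measurable]: "\<tau> \<in> borel_measurable M" by (rule ST_meas[OF tau])
  have N1[measurable]: "(\<lambda>\<omega>. N \<theta> (\<tau> \<omega>) \<omega>) \<in> borel_measurable M"
    by (rule Nrho_meas[OF taum Wtau_meas[OF tau]])
  have NT[measurable]: "N \<theta> T \<in> borel_measurable M" using N_measF[of T] measF[of T] Tpos by auto
  have hm: "h k \<in> borel_measurable M" for k unfolding h_def[abs_def] by measurable
  have h'm: "h' k \<in> borel_measurable M" for k unfolding h'_def[abs_def] by measurable
  have hinc: "incseq h" unfolding h_def incseq_def le_fun_def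
    by (auto intro!: ennreal_leI mult_right_mono)
  have h'inc: "incseq h'" unfolding h'_def incseq_def le_fun_def
    by (auto intro!: ennreal_leI mult_right_mono)
  have hl: "(\<lambda>k. h k x) \<longlonglongrightarrow> ennreal (g x * N \<theta> T x)" for x
    unfolding h_def by (intro tendsto_ennrealI tendsto_mult min_real_lim tendsto_const)
  have h'l: "(\<lambda>k. h' k x) \<longlonglongrightarrow> ennreal (g x * N \<theta> (\<tau> x) x)" for x
    unfolding h'_def by (intro tendsto_ennrealI tendsto_mult min_real_lim tendsto_const)
  have L1: "(\<lambda>k. integral\<^sup>N M (h k)) \<longlonglongrightarrow> (\<integral>\<^sup>+x. ennreal (g x * N \<theta> T x) \<partial>M)"
    by (rule nn_integral_LIMSEQ[OF hinc hm hl])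
  have L2: "(\<lambda>k. integral\<^sup>N M (h' k)) \<longlonglongrightarrow> (\<integral>\<^sup>+x. ennreal (g x * N \<theta> (\<tau> x) x) \<partial>M)"
    by (rule nn_integral_LIMSEQ[OF h'inc h'm h'l])
  have eqk: "integral\<^sup>N M (h k) = integral\<^sup>N M (h' k)" for k
  proof -
    have a: "integral\<^sup>N M (h k) = (\<integral>\<^sup>+\<omega>. ennreal (min (g \<omega>) (real k)) * ennreal (N \<theta> T \<omega>) \<partial>M)"
      unfolding h_def by (intro nn_integral_cong) (simp add: ennreal_mult gnn)
    have b: "integral\<^sup>N M (h' k) = (\<integral>\<^sup>+\<omega>. ennreal (min (g \<omega>) (real k)) * ennreal (N \<theta> (\<tau> \<omega>) \<omega>) \<partial>M)"
      unfolding h'_def by (intro nn_integral_cong) (simp add: ennreal_mult gnn)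
    show ?thesis unfolding a b
      by (rule core_bdd[OF tau _ _ Fmeas_min[OF tau Fm], where G="real k"]) (auto simp: gnn)
  qed
  have "(\<integral>\<^sup>+x. ennreal (g x * N \<theta> T x) \<partial>M) = (\<integral>\<^sup>+x. ennreal (g x * N \<theta> (\<tau> x) x) \<partial>M)"
    using L1 L2 unfolding eqk by (rule LIMSEQ_unique)
  moreover have "(\<integral>\<^sup>+x. ennreal (g x * N \<theta> T x) \<partial>M) = (\<integral>\<^sup>+\<omega>. ennreal (g \<omega>) * ennreal (N \<theta> T \<omega>) \<partial>M)"
    by (intro nn_integral_cong) (simp add: ennreal_mult gnn)
  moreover have "(\<integral>\<^sup>+x. ennreal (g x * N \<theta> (\<tau> x) x) \<partial>M) = (\<integral>\<^sup>+\<omega>. ennreal (g \<omega>) * ennreal (N \<theta> (\<tau> \<omega>) \<omega>) \<partial>M)"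
    by (intro nn_integral_cong) (simp add: ennreal_mult gnn)
  ultimately show ?thesis by simp
qed

lemma core2:
  assumes tau: "\<tau> \<in> ST" and rho: "\<rho> \<in> ST" and le: "\<And>\<omega>. \<omega> \<in> space M \<Longrightarrow> \<tau> \<omega> \<le> \<rho> \<omega>"
    and gnn: "\<And>\<omega>. \<omega> \<in> space M \<Longrightarrow> 0 \<le> g \<omega>" and Fm: "Fmeas \<tau> g"
  shows "(\<integral>\<^sup>+\<omega>. ennreal (g \<omega>) * ennreal (N \<theta> (\<rho> \<omega>) \<omega>) \<partial>M) = (\<integral>\<^sup>+\<omega>. ennreal (g \<omega>) * ennreal (N \<theta> (\<tau> \<omega>) \<omega>) \<partial>M)"
proof -
  have Fr: "Fmeas \<rho> g" unfolding Fmeas_def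
  proof
    fix t assume t: "t \<in> {0..T}"
    have S: "{\<omega>\<in>space M. \<rho> \<omega> \<le> t} \<in> sets (F t)" using ST_set[OF rho] t by auto
    have m1: "(\<lambda>\<omega>. g \<omega> * indicator {\<omega>\<in>space M. \<tau> \<omega> \<le> t} \<omega>) \<in> borel_measurable (F t)"
      using Fm t unfolding Fmeas_def by blast
    have "(\<lambda>\<omega>. (g \<omega> * indicator {\<omega>\<in>space M. \<tau> \<omega> \<le> t} \<omega>) * indicator {\<omega>\<in>space M. \<rho> \<omega> \<le> t} \<omega>) \<in> borel_measurable (F t)"
      using m1 borel_measurable_indicator[OF S] by (rule borel_measurable_times)
    moreover have "\<And>w. w \<in> space (F t) \<Longrightarrow> (g w * indicator {\<omega>\<in>space M. \<tau> \<omega> \<le> t} w) * indicator {\<omega>\<in>space M. \<rho> \<omega> \<le> t} w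
        = g w * indicator {\<omega>\<in>space M. \<rho> \<omega> \<le> t} w"
    proof -
      fix w assume "w \<in> space (F t)"
      then have w: "w \<in> space M" using spaceF t by auto
      show "(g w * indicator {\<omega>\<in>space M. \<tau> \<omega> \<le> t} w) * indicator {\<omega>\<in>space M. \<rho> \<omega> \<le> t} w
        = g w * indicator {\<omega>\<in>space M. \<rho> \<omega> \<le> t} w"
        using le[OF w] w by (auto simp: indicator_def)
    qed
    ultimately show "(\<lambda>\<omega>. g \<omega> * indicator {\<omega>\<in>space M. \<rho> \<omega> \<le> t} \<omega>) \<in> borel_measurable (F t)"
      by (rule meas_eq)
  qed
  show ?thesis using core[OF rho gnn Fr, of \<theta>] core[OF tau gnn Fm, of \<theta>] by simp
qed


lemma neg_enn: "(b::ennreal) \<le> a \<Longrightarrow> - enn2ereal a \<le> - enn2ereal b"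
  by (simp add: less_eq_ennreal.rep_eq)

lemma partA:
  assumes aB: "0 < \<alpha>B" and mu: "\<alpha>B / 2 < \<mu>" and dl: "0 \<le> \<delta>" and sig: "\<sigma> \<in> ST" and tau: "\<tau> \<in> ST"
  shows "util_B M \<alpha>B (\<lambda>\<omega>. 0) (\<lambda>t \<omega>. W t \<omega> + \<mu> * t) (\<lambda>t \<omega>. W t \<omega> + \<mu> * t + \<delta>) \<tau> \<sigma>
       \<le> util_B M \<alpha>B (\<lambda>\<omega>. 0) (\<lambda>t \<omega>. W t \<omega> + \<mu> * t) (\<lambda>t \<omega>. W t \<omega> + \<mu> * t + \<delta>) (\<lambda>\<omega>. T) \<sigma>"
proof -
  define X where "X = (\<lambda>t \<omega>. W t \<omega> + \<mu> * t)"
  define Y where "Y = (\<lambda>t \<omega>. W t \<omega> + \<mu> * t + \<delta>)"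
  define k where "k = \<alpha>B * \<mu> - (\<alpha>B^2) / 2"
  define \<theta> where "\<theta> = - \<alpha>B"
  have k: "0 < k"
  proof -
    have "\<alpha>B * (\<alpha>B / 2) < \<alpha>B * \<mu>" using aB mu by (intro mult_strict_left_mono) auto
    then show ?thesis by (simp add: k_def power2_eq_square)
  qed
  define \<rho> where "\<rho> \<omega> = max (\<tau> \<omega>) (\<sigma> \<omega>)" for \<omega>
  have rho: "\<rho> \<in> ST" unfolding \<rho>_def by (rule ST_max[OF tau sig])
  define g where "g \<omega> = indicator {\<omega>\<in>space M. \<tau> \<omega> \<le> \<sigma> \<omega>} \<omega> * exp (- k * \<tau> \<omega>)" for \<omega>
  define Q where "Q \<omega> = ennreal (indicator {\<omega>\<in>space M. \<sigma> \<omega> < \<tau> \<omega>} \<omega> * exp (- \<alpha>B * Y (\<sigma> \<omega>) \<omega>))" for \<omega>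
  have eX: "exp (- \<alpha>B * X t \<omega>) = N \<theta> t \<omega> * exp (- k * t)" for t \<omega>
  proof -
    have "- \<alpha>B * X t \<omega> = (\<theta> * W t \<omega> - (\<theta>^2) * t / 2) + (- k * t)"
      by (simp add: X_def \<theta>_def k_def field_simps power2_eq_square)
    then have "exp (- \<alpha>B * X t \<omega>) = exp ((\<theta> * W t \<omega> - (\<theta>^2) * t / 2) + (- k * t))" by (simp only:)
    then show ?thesis unfolding N_def exp_add .
  qed
  have eY: "exp (- \<alpha>B * Y t \<omega>) = exp (- \<alpha>B * X t \<omega>) * exp (- \<alpha>B * \<delta>)" for t \<omega>
  proof -
    have "- \<alpha>B * Y t \<omega> = - \<alpha>B * X t \<omega> + (- \<alpha>B * \<delta>)" by (simp add: X_def Y_def algebra_simps)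
    then have "exp (- \<alpha>B * Y t \<omega>) = exp (- \<alpha>B * X t \<omega> + (- \<alpha>B * \<delta>))" by (simp only:)
    then show ?thesis unfolding exp_add .
  qed
  have eYle: "exp (- \<alpha>B * Y t \<omega>) \<le> exp (- \<alpha>B * X t \<omega>)" for t \<omega>
  proof -
    have "exp (- \<alpha>B * \<delta>) \<le> 1" using aB dl by simp
    then show ?thesis unfolding eY by (intro mult_left_le) auto
  qed
  have gnn: "0 \<le> g \<omega>" for \<omega> by (simp add: g_def)
  have b1: "exp (- \<alpha>B * (0 + payoff X Y (\<lambda>\<omega>. T) \<sigma> \<omega>))
      \<le> indicator {\<omega>\<in>space M. \<sigma> \<omega> < \<tau> \<omega>} \<omega> * exp (- \<alpha>B * Y (\<sigma> \<omega>) \<omega>) + g \<omega> * N \<theta> (\<rho> \<omega>) \<omega>"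
    if om: "\<omega> \<in> space M" for \<omega>
  proof (cases "\<tau> \<omega> \<le> \<sigma> \<omega>")
    case True
    have sT: "\<sigma> \<omega> \<le> T" using ST_range[OF sig om] by simp
    have r: "\<rho> \<omega> = \<sigma> \<omega>" using True by (simp add: \<rho>_def)
    have "exp (- \<alpha>B * payoff X Y (\<lambda>\<omega>. T) \<sigma> \<omega>) \<le> exp (- \<alpha>B * X (\<sigma> \<omega>) \<omega>)"
    proof (cases "T \<le> \<sigma> \<omega>")
      case True2: True
      then have "\<sigma> \<omega> = T" using sT by simp
      then show ?thesis using True2 by (simp add: payoff_def)
    next
      case False
      then show ?thesis using eYle by (simp add: payoff_def)
    qed
    also have "\<dots> = N \<theta> (\<sigma> \<omega>) \<omega> * exp (- k * \<sigma> \<omega>)" by (rule eX)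
    also have "\<dots> \<le> N \<theta> (\<sigma> \<omega>) \<omega> * exp (- k * \<tau> \<omega>)"
      using True k by (intro mult_left_mono) auto
    also have "\<dots> = g \<omega> * N \<theta> (\<rho> \<omega>) \<omega>" using True om by (simp add: g_def r)
    finally show ?thesis using True by simp
  next
    case False
    have tT: "\<tau> \<omega> \<le> T" using ST_range[OF tau om] by simp
    have "\<not> T \<le> \<sigma> \<omega>" using False tT by simp
    then show ?thesis using False om by (simp add: payoff_def g_def)
  qed
  have e2: "exp (- \<alpha>B * (0 + payoff X Y \<tau> \<sigma> \<omega>))
      = indicator {\<omega>\<in>space M. \<sigma> \<omega> < \<tau> \<omega>} \<omega> * exp (- \<alpha>B * Y (\<sigma> \<omega>) \<omega>) + g \<omega> * N \<theta> (\<tau> \<omega>) \<omega>"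
    if om: "\<omega> \<in> space M" for \<omega>
  proof (cases "\<tau> \<omega> \<le> \<sigma> \<omega>")
    case True
    then show ?thesis using om eX[of "\<tau> \<omega>" \<omega>] by (simp add: payoff_def g_def mult.commute)
  next
    case False
    then show ?thesis using om by (simp add: payoff_def g_def)
  qed
  have taum[measurable]: "\<tau> \<in> borel_measurable M" by (rule ST_meas[OF tau])
  have sigm[measurable]: "\<sigma> \<in> borel_measurable M" by (rule ST_meas[OF sig])
  have rhom[measurable]: "\<rho> \<in> borel_measurable M" by (rule ST_meas[OF rho])
  have Wsig[measurable]: "(\<lambda>\<omega>. W (\<sigma> \<omega>) \<omega>) \<in> borel_measurable M" by (rule Wtau_meas[OF sig])
  have Nr[measurable]: "(\<lambda>\<omega>. N \<theta> (\<rho> \<omega>) \<omega>) \<in> borel_measurable M"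
    by (rule Nrho_meas[OF rhom Wtau_meas[OF rho]])
  have Nt[measurable]: "(\<lambda>\<omega>. N \<theta> (\<tau> \<omega>) \<omega>) \<in> borel_measurable M"
    by (rule Nrho_meas[OF taum Wtau_meas[OF tau]])
  have Qm[measurable]: "Q \<in> borel_measurable M" unfolding Q_def[abs_def] Y_def by measurable
  have gm[measurable]: "g \<in> borel_measurable M" unfolding g_def[abs_def] by measurable
  have Fm: "Fmeas \<tau> g" unfolding Fmeas_def
  proof
    fix t assume t: "t \<in> {0..T}"
    have [measurable]: "(\<lambda>\<omega>. min (\<tau> \<omega>) t) \<in> borel_measurable (F t)" "(\<lambda>\<omega>. min (\<sigma> \<omega>) t) \<in> borel_measurable (F t)"
      using ST_min_meas[OF tau] ST_min_meas[OF sig] t by auto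
    have [measurable]: "{\<omega>\<in>space M. \<tau> \<omega> \<le> t} \<in> sets (F t)" using ST_set[OF tau] t by auto
    have "(\<lambda>\<omega>. (if min (\<tau> \<omega>) t \<le> min (\<sigma> \<omega>) t then 1 else 0) * exp (- k * min (\<tau> \<omega>) t) * indicator {\<omega>\<in>space M. \<tau> \<omega> \<le> t} \<omega>) \<in> borel_measurable (F t)"
      by measurable
    then show "(\<lambda>\<omega>. g \<omega> * indicator {\<omega>\<in>space M. \<tau> \<omega> \<le> t} \<omega>) \<in> borel_measurable (F t)"
    proof (rule meas_eq)
      fix w assume "w \<in> space (F t)"
      then have w: "w \<in> space M" using spaceF t by auto
      show "(if min (\<tau> w) t \<le> min (\<sigma> w) t then 1 else 0) * exp (- k * min (\<tau> w) t) * indicator {\<omega>\<in>space M. \<tau> \<omega> \<le> t} w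
          = g w * indicator {\<omega>\<in>space M. \<tau> \<omega> \<le> t} w"
        using w by (cases "\<tau> w \<le> t") (auto simp: g_def indicator_def min_def)
    qed
  qed
  have le_rho: "\<And>\<omega>. \<omega> \<in> space M \<Longrightarrow> \<tau> \<omega> \<le> \<rho> \<omega>" by (simp add: \<rho>_def)
  have gnn': "\<And>\<omega>. \<omega> \<in> space M \<Longrightarrow> 0 \<le> g \<omega>" by (simp add: g_def)
  have core_eq: "(\<integral>\<^sup>+\<omega>. ennreal (g \<omega>) * ennreal (N \<theta> (\<rho> \<omega>) \<omega>) \<partial>M) = (\<integral>\<^sup>+\<omega>. ennreal (g \<omega>) * ennreal (N \<theta> (\<tau> \<omega>) \<omega>) \<partial>M)"
    by (rule core2[OF tau rho le_rho gnn' Fm])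
  have "(\<integral>\<^sup>+\<omega>. ennreal (exp (- \<alpha>B * (0 + payoff X Y (\<lambda>\<omega>. T) \<sigma> \<omega>))) \<partial>M)
      \<le> (\<integral>\<^sup>+\<omega>. Q \<omega> + ennreal (g \<omega>) * ennreal (N \<theta> (\<rho> \<omega>) \<omega>) \<partial>M)"
  proof (rule nn_integral_mono)
    fix \<omega> assume om: "\<omega> \<in> space M"
    have "ennreal (exp (- \<alpha>B * (0 + payoff X Y (\<lambda>\<omega>. T) \<sigma> \<omega>)))
       \<le> ennreal (indicator {\<omega>\<in>space M. \<sigma> \<omega> < \<tau> \<omega>} \<omega> * exp (- \<alpha>B * Y (\<sigma> \<omega>) \<omega>) + g \<omega> * N \<theta> (\<rho> \<omega>) \<omega>)"
      by (rule ennreal_leI[OF b1[OF om]])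
    also have "\<dots> = Q \<omega> + ennreal (g \<omega>) * ennreal (N \<theta> (\<rho> \<omega>) \<omega>)"
      unfolding Q_def by (subst ennreal_plus) (auto simp: ennreal_mult gnn)
    finally show "ennreal (exp (- \<alpha>B * (0 + payoff X Y (\<lambda>\<omega>. T) \<sigma> \<omega>))) \<le> Q \<omega> + ennreal (g \<omega>) * ennreal (N \<theta> (\<rho> \<omega>) \<omega>)" .
  qed
  also have "\<dots> = (\<integral>\<^sup>+\<omega>. Q \<omega> \<partial>M) + (\<integral>\<^sup>+\<omega>. ennreal (g \<omega>) * ennreal (N \<theta> (\<rho> \<omega>) \<omega>) \<partial>M)"
    by (rule nn_integral_add) measurable
  also have "\<dots> = (\<integral>\<^sup>+\<omega>. Q \<omega> \<partial>M) + (\<integral>\<^sup>+\<omega>. ennreal (g \<omega>) * ennreal (N \<theta> (\<tau> \<omega>) \<omega>) \<partial>M)"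
    unfolding core_eq ..
  also have "\<dots> = (\<integral>\<^sup>+\<omega>. Q \<omega> + ennreal (g \<omega>) * ennreal (N \<theta> (\<tau> \<omega>) \<omega>) \<partial>M)"
    by (rule nn_integral_add[symmetric]) measurable
  also have "\<dots> = (\<integral>\<^sup>+\<omega>. ennreal (exp (- \<alpha>B * (0 + payoff X Y \<tau> \<sigma> \<omega>))) \<partial>M)"
  proof (rule nn_integral_cong)
    fix \<omega> assume om: "\<omega> \<in> space M"
    show "Q \<omega> + ennreal (g \<omega>) * ennreal (N \<theta> (\<tau> \<omega>) \<omega>) = ennreal (exp (- \<alpha>B * (0 + payoff X Y \<tau> \<sigma> \<omega>)))"
      unfolding e2[OF om] Q_def by (subst ennreal_plus) (auto simp: ennreal_mult gnn)
  qed
  finally have main: "(\<integral>\<^sup>+\<omega>. ennreal (exp (- \<alpha>B * (0 + payoff X Y (\<lambda>\<omega>. T) \<sigma> \<omega>))) \<partial>M)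
      \<le> (\<integral>\<^sup>+\<omega>. ennreal (exp (- \<alpha>B * (0 + payoff X Y \<tau> \<sigma> \<omega>))) \<partial>M)" .
  show ?thesis unfolding util_B_def X_def[symmetric] Y_def[symmetric]
    by (rule neg_enn[OF main])
qed


lemma partB:
  assumes aA: "0 < \<alpha>A" and mu: "0 \<le> \<mu>" and dh: "\<delta> < (\<alpha>A / 2 + \<mu>) * T" and sig: "\<sigma> \<in> ST"
  shows "util_A M \<alpha>A (\<lambda>\<omega>. 0) (\<lambda>t \<omega>. W t \<omega> + \<mu> * t) (\<lambda>t \<omega>. W t \<omega> + \<mu> * t + \<delta>) (\<lambda>\<omega>. T) \<sigma>
       \<le> util_A M \<alpha>A (\<lambda>\<omega>. 0) (\<lambda>t \<omega>. W t \<omega> + \<mu> * t) (\<lambda>t \<omega>. W t \<omega> + \<mu> * t + \<delta>) (\<lambda>\<omega>. T) (\<lambda>\<omega>. 0)"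
proof -
  interpret P: prob_space M by (rule PS)
  define X where "X = (\<lambda>t \<omega>. W t \<omega> + \<mu> * t)"
  define Y where "Y = (\<lambda>t \<omega>. W t \<omega> + \<mu> * t + \<delta>)"
  define k where "k = (\<alpha>A^2) / 2 + \<alpha>A * \<mu>"
  have k0: "0 \<le> k" using aA mu by (simp add: k_def)
  have kT: "\<alpha>A * \<delta> \<le> k * T"
  proof -
    have "\<alpha>A * \<delta> \<le> \<alpha>A * ((\<alpha>A / 2 + \<mu>) * T)" using aA dh by (intro mult_left_mono) auto
    also have "\<dots> = k * T" by (simp add: k_def power2_eq_square algebra_simps)
    finally show ?thesis .
  qed
  have eX: "exp (\<alpha>A * X t \<omega>) = N \<alpha>A t \<omega> * exp (k * t)" for t \<omega>
  proof -
    have "\<alpha>A * X t \<omega> = (\<alpha>A * W t \<omega> - (\<alpha>A^2) * t / 2) + k * t"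
      by (simp add: X_def k_def field_simps power2_eq_square)
    then have "exp (\<alpha>A * X t \<omega>) = exp ((\<alpha>A * W t \<omega> - (\<alpha>A^2) * t / 2) + k * t)" by (simp only:)
    then show ?thesis unfolding N_def exp_add .
  qed
  have lhs: "(\<integral>\<^sup>+\<omega>. ennreal (exp (- \<alpha>A * (0 - payoff X Y (\<lambda>\<omega>. T) (\<lambda>\<omega>. 0) \<omega>))) \<partial>M) = ennreal (exp (\<alpha>A * \<delta>))"
  proof -
    have "(\<integral>\<^sup>+\<omega>. ennreal (exp (- \<alpha>A * (0 - payoff X Y (\<lambda>\<omega>. T) (\<lambda>\<omega>. 0) \<omega>))) \<partial>M) = (\<integral>\<^sup>+\<omega>. ennreal (exp (\<alpha>A * \<delta>)) \<partial>M)"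
    proof (rule nn_integral_cong)
      fix \<omega> assume om: "\<omega> \<in> space M"
      have "\<not> T \<le> 0" using Tpos by simp
      then show "ennreal (exp (- \<alpha>A * (0 - payoff X Y (\<lambda>\<omega>. T) (\<lambda>\<omega>. 0) \<omega>))) = ennreal (exp (\<alpha>A * \<delta>))"
        using W0[OF om] by (simp add: payoff_def Y_def)
    qed
    also have "\<dots> = ennreal (exp (\<alpha>A * \<delta>))" using P.emeasure_space_1 by simp
    finally show ?thesis .
  qed
  have taum[measurable]: "\<sigma> \<in> borel_measurable M" by (rule ST_meas[OF sig])
  have Ns[measurable]: "(\<lambda>\<omega>. N \<alpha>A (\<sigma> \<omega>) \<omega>) \<in> borel_measurable M"
    by (rule Nrho_meas[OF taum Wtau_meas[OF sig]])
  have int1: "(\<integral>\<^sup>+\<omega>. ennreal (N \<alpha>A (\<sigma> \<omega>) \<omega>) \<partial>M) = 1"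
  proof -
    have "(\<integral>\<^sup>+\<omega>. ennreal 1 * ennreal (N \<alpha>A T \<omega>) \<partial>M) = (\<integral>\<^sup>+\<omega>. ennreal 1 * ennreal (N \<alpha>A (\<sigma> \<omega>) \<omega>) \<partial>M)"
      by (rule core[OF sig _ Fmeas_one[OF sig]]) simp
    then show ?thesis using N_int1[of \<alpha>A] by simp
  qed
  have "ennreal (exp (\<alpha>A * \<delta>)) = ennreal (exp (\<alpha>A * \<delta>)) * (\<integral>\<^sup>+\<omega>. ennreal (N \<alpha>A (\<sigma> \<omega>) \<omega>) \<partial>M)"
    by (simp add: int1)
  also have "\<dots> = (\<integral>\<^sup>+\<omega>. ennreal (exp (\<alpha>A * \<delta>)) * ennreal (N \<alpha>A (\<sigma> \<omega>) \<omega>) \<partial>M)"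
    by (rule nn_integral_cmult[symmetric]) measurable
  also have "\<dots> \<le> (\<integral>\<^sup>+\<omega>. ennreal (exp (- \<alpha>A * (0 - payoff X Y (\<lambda>\<omega>. T) \<sigma> \<omega>))) \<partial>M)"
  proof (rule nn_integral_mono)
    fix \<omega> assume om: "\<omega> \<in> space M"
    have r: "0 \<le> \<sigma> \<omega>" "\<sigma> \<omega> \<le> T" using ST_range[OF sig om] by auto
    have "exp (\<alpha>A * \<delta>) * N \<alpha>A (\<sigma> \<omega>) \<omega> \<le> exp (\<alpha>A * payoff X Y (\<lambda>\<omega>. T) \<sigma> \<omega>)"
    proof (cases "T \<le> \<sigma> \<omega>")
      case True
      then have sT: "\<sigma> \<omega> = T" using r by simp
      have "exp (\<alpha>A * \<delta>) \<le> exp (k * T)" using kT by simp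
      then have "exp (\<alpha>A * \<delta>) * N \<alpha>A T \<omega> \<le> exp (k * T) * N \<alpha>A T \<omega>" by (intro mult_right_mono) auto
      also have "\<dots> = exp (\<alpha>A * X T \<omega>)" using eX[of T \<omega>] by simp
      finally show ?thesis using True sT by (simp add: payoff_def)
    next
      case False
      have e1: "exp (\<alpha>A * Y (\<sigma> \<omega>) \<omega>) = exp (\<alpha>A * \<delta>) * exp (\<alpha>A * X (\<sigma> \<omega>) \<omega>)"
      proof -
        have "\<alpha>A * Y (\<sigma> \<omega>) \<omega> = \<alpha>A * \<delta> + \<alpha>A * X (\<sigma> \<omega>) \<omega>" by (simp add: X_def Y_def algebra_simps)
        then have "exp (\<alpha>A * Y (\<sigma> \<omega>) \<omega>) = exp (\<alpha>A * \<delta> + \<alpha>A * X (\<sigma> \<omega>) \<omega>)" by (simp only:)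
        then show ?thesis unfolding exp_add .
      qed
      have "1 \<le> exp (k * \<sigma> \<omega>)" using k0 r by simp
      then have "N \<alpha>A (\<sigma> \<omega>) \<omega> \<le> N \<alpha>A (\<sigma> \<omega>) \<omega> * exp (k * \<sigma> \<omega>)"
        by (intro mult_le_cancel_left1[THEN iffD2]) (auto simp: N_def)
      then have "exp (\<alpha>A * \<delta>) * N \<alpha>A (\<sigma> \<omega>) \<omega> \<le> exp (\<alpha>A * \<delta>) * (N \<alpha>A (\<sigma> \<omega>) \<omega> * exp (k * \<sigma> \<omega>))"
        by (intro mult_left_mono) auto
      also have "\<dots> = exp (\<alpha>A * Y (\<sigma> \<omega>) \<omega>)" unfolding e1 eX ..
      finally show ?thesis using False by (simp add: payoff_def)
    qed
    then have "ennreal (exp (\<alpha>A * \<delta>) * N \<alpha>A (\<sigma> \<omega>) \<omega>) \<le> ennreal (exp (- \<alpha>A * (0 - payoff X Y (\<lambda>\<omega>. T) \<sigma> \<omega>)))"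
      by (intro ennreal_leI) simp
    then show "ennreal (exp (\<alpha>A * \<delta>)) * ennreal (N \<alpha>A (\<sigma> \<omega>) \<omega>) \<le> ennreal (exp (- \<alpha>A * (0 - payoff X Y (\<lambda>\<omega>. T) \<sigma> \<omega>)))"
      by (simp add: ennreal_mult)
  qed
  finally have main: "(\<integral>\<^sup>+\<omega>. ennreal (exp (- \<alpha>A * (0 - payoff X Y (\<lambda>\<omega>. T) (\<lambda>\<omega>. 0) \<omega>))) \<partial>M)
      \<le> (\<integral>\<^sup>+\<omega>. ennreal (exp (- \<alpha>A * (0 - payoff X Y (\<lambda>\<omega>. T) \<sigma> \<omega>))) \<partial>M)" unfolding lhs .
  show ?thesis unfolding util_A_def X_def[symmetric] Y_def[symmetric]
    by (rule neg_enn[OF main])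
qed


lemma partC:
  assumes aA: "0 < \<alpha>A" and mh: "\<mu> < \<alpha>A / 2" and dl: "0 \<le> \<delta>" and sig: "\<sigma> \<in> ST"
  shows "util_A M \<alpha>A (\<lambda>\<omega>. W T \<omega> + \<mu> * T) (\<lambda>t \<omega>. W t \<omega> + \<mu> * t) (\<lambda>t \<omega>. W t \<omega> + \<mu> * t + \<delta>) (\<lambda>\<omega>. T) \<sigma>
       \<le> util_A M \<alpha>A (\<lambda>\<omega>. W T \<omega> + \<mu> * T) (\<lambda>t \<omega>. W t \<omega> + \<mu> * t) (\<lambda>t \<omega>. W t \<omega> + \<mu> * t + \<delta>) (\<lambda>\<omega>. T) (\<lambda>\<omega>. T)"
proof -
  interpret P: prob_space M by (rule PS)
  define X where "X = (\<lambda>t \<omega>. W t \<omega> + \<mu> * t)"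
  define Y where "Y = (\<lambda>t \<omega>. W t \<omega> + \<mu> * t + \<delta>)"
  define C where "C = (\<lambda>\<omega>. W T \<omega> + \<mu> * T)"
  define \<theta> where "\<theta> = - \<alpha>A"
  define A where "A = {\<omega>\<in>space M. \<sigma> \<omega> < T}"
  define B where "B = {\<omega>\<in>space M. T \<le> \<sigma> \<omega>}"
  define E where "E \<omega> = \<alpha>A * \<delta> + \<alpha>A * W (\<sigma> \<omega>) \<omega> + (\<alpha>A^2) * T / 2 - \<alpha>A * \<mu> * (T - \<sigma> \<omega>)" for \<omega>
  define g where "g \<omega> = indicator A \<omega> * exp (E \<omega>)" for \<omega>
  define I where "I \<omega> = exp (- \<alpha>A * (C \<omega> - payoff X Y (\<lambda>\<omega>. T) \<sigma> \<omega>))" for \<omega>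
  have gnn: "\<And>\<omega>. \<omega> \<in> space M \<Longrightarrow> 0 \<le> g \<omega>" by (simp add: g_def)
  have eqI: "I \<omega> = indicator B \<omega> + g \<omega> * N \<theta> T \<omega>" if om: "\<omega> \<in> space M" for \<omega>
  proof (cases "T \<le> \<sigma> \<omega>")
    case True
    then show ?thesis using om by (simp add: I_def g_def A_def B_def payoff_def X_def C_def)
  next
    case False
    have "- \<alpha>A * (C \<omega> - Y (\<sigma> \<omega>) \<omega>) = E \<omega> + (\<theta> * W T \<omega> - (\<theta>^2) * T / 2)"
      by (simp add: C_def Y_def E_def \<theta>_def field_simps power2_eq_square)
    then have "exp (- \<alpha>A * (C \<omega> - Y (\<sigma> \<omega>) \<omega>)) = exp (E \<omega> + (\<theta> * W T \<omega> - (\<theta>^2) * T / 2))" by (simp only:)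
    then have "exp (- \<alpha>A * (C \<omega> - Y (\<sigma> \<omega>) \<omega>)) = exp (E \<omega>) * N \<theta> T \<omega>" unfolding exp_add N_def .
    then show ?thesis using False om by (simp add: I_def g_def A_def B_def payoff_def)
  qed
  have geN: "indicator A \<omega> \<le> g \<omega> * N \<theta> (\<sigma> \<omega>) \<omega>" if om: "\<omega> \<in> space M" for \<omega>
  proof (cases "\<sigma> \<omega> < T")
    case True
    have "E \<omega> + (\<theta> * W (\<sigma> \<omega>) \<omega> - (\<theta>^2) * \<sigma> \<omega> / 2) = \<alpha>A * \<delta> + (\<alpha>A * (\<alpha>A / 2 - \<mu>)) * (T - \<sigma> \<omega>)"
      by (simp add: E_def \<theta>_def field_simps power2_eq_square)
    moreover have "0 \<le> \<alpha>A * \<delta> + (\<alpha>A * (\<alpha>A / 2 - \<mu>)) * (T - \<sigma> \<omega>)"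
      using aA mh dl True by (intro add_nonneg_nonneg mult_nonneg_nonneg) auto
    ultimately have "1 \<le> exp (E \<omega> + (\<theta> * W (\<sigma> \<omega>) \<omega> - (\<theta>^2) * \<sigma> \<omega> / 2))" by simp
    then have "1 \<le> exp (E \<omega>) * N \<theta> (\<sigma> \<omega>) \<omega>" unfolding exp_add N_def .
    then show ?thesis using True om by (simp add: g_def A_def)
  next
    case False
    then show ?thesis using om by (simp add: g_def A_def)
  qed
  have sigm[measurable]: "\<sigma> \<in> borel_measurable M" by (rule ST_meas[OF sig])
  have Wsig[measurable]: "(\<lambda>\<omega>. W (\<sigma> \<omega>) \<omega>) \<in> borel_measurable M" by (rule Wtau_meas[OF sig])
  have Ns[measurable]: "(\<lambda>\<omega>. N \<theta> (\<sigma> \<omega>) \<omega>) \<in> borel_measurable M"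
    by (rule Nrho_meas[OF sigm Wsig])
  have NT[measurable]: "N \<theta> T \<in> borel_measurable M" using N_measF[of T] measF[of T] Tpos by auto
  have Am[measurable]: "A \<in> sets M" unfolding A_def by measurable
  have Bm[measurable]: "B \<in> sets M" unfolding B_def by measurable
  have gm[measurable]: "g \<in> borel_measurable M" unfolding g_def[abs_def] E_def by measurable
  have Fm: "Fmeas \<sigma> g" unfolding Fmeas_def
  proof
    fix t assume t: "t \<in> {0..T}"
    have [measurable]: "(\<lambda>\<omega>. min (\<sigma> \<omega>) t) \<in> borel_measurable (F t)" "(\<lambda>\<omega>. W (min (\<sigma> \<omega>) t) \<omega>) \<in> borel_measurable (F t)"
      using ST_min_meas[OF sig] Wmin_meas[OF sig] t by auto
    have [measurable]: "{\<omega>\<in>space M. \<sigma> \<omega> \<le> t} \<in> sets (F t)" using ST_set[OF sig] t by auto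
    have "(\<lambda>\<omega>. (if min (\<sigma> \<omega>) t < T then 1 else 0) * exp (\<alpha>A * \<delta> + \<alpha>A * W (min (\<sigma> \<omega>) t) \<omega> + (\<alpha>A^2) * T / 2 - \<alpha>A * \<mu> * (T - min (\<sigma> \<omega>) t)) * indicator {\<omega>\<in>space M. \<sigma> \<omega> \<le> t} \<omega>) \<in> borel_measurable (F t)"
      by measurable
    then show "(\<lambda>\<omega>. g \<omega> * indicator {\<omega>\<in>space M. \<sigma> \<omega> \<le> t} \<omega>) \<in> borel_measurable (F t)"
    proof (rule meas_eq)
      fix w assume "w \<in> space (F t)"
      then have w: "w \<in> space M" using spaceF t by auto
      show "(if min (\<sigma> w) t < T then 1 else 0) * exp (\<alpha>A * \<delta> + \<alpha>A * W (min (\<sigma> w) t) w + (\<alpha>A^2) * T / 2 - \<alpha>A * \<mu> * (T - min (\<sigma> w) t)) * indicator {\<omega>\<in>space M. \<sigma> \<omega> \<le> t} w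
          = g w * indicator {\<omega>\<in>space M. \<sigma> \<omega> \<le> t} w"
      proof (cases "\<sigma> w \<le> t")
        case True
        then have "min (\<sigma> w) t = \<sigma> w" by simp
        then show ?thesis using w True by (simp add: g_def E_def A_def indicator_def)
      next
        case False
        then show ?thesis using w by (simp add: indicator_def)
      qed
    qed
  qed
  have core_eq: "(\<integral>\<^sup>+\<omega>. ennreal (g \<omega>) * ennreal (N \<theta> T \<omega>) \<partial>M) = (\<integral>\<^sup>+\<omega>. ennreal (g \<omega>) * ennreal (N \<theta> (\<sigma> \<omega>) \<omega>) \<partial>M)"
    by (rule core[OF sig gnn Fm])
  have one: "(\<integral>\<^sup>+\<omega>. ennreal (exp (- \<alpha>A * (C \<omega> - payoff X Y (\<lambda>\<omega>. T) (\<lambda>\<omega>. T) \<omega>))) \<partial>M) = 1"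
  proof -
    have "(\<integral>\<^sup>+\<omega>. ennreal (exp (- \<alpha>A * (C \<omega> - payoff X Y (\<lambda>\<omega>. T) (\<lambda>\<omega>. T) \<omega>))) \<partial>M) = (\<integral>\<^sup>+\<omega>. 1 \<partial>M)"
      by (intro nn_integral_cong) (simp add: payoff_def C_def X_def)
    then show ?thesis using P.emeasure_space_1 by simp
  qed
  have "(1::ennreal) = (\<integral>\<^sup>+\<omega>. indicator B \<omega> + indicator A \<omega> \<partial>M)"
  proof -
    have "(\<integral>\<^sup>+\<omega>. indicator B \<omega> + indicator A \<omega> \<partial>M) = (\<integral>\<^sup>+\<omega>. 1 \<partial>M)"
      by (intro nn_integral_cong) (auto simp: A_def B_def indicator_def)
    then show ?thesis using P.emeasure_space_1 by simp
  qed
  also have "\<dots> = (\<integral>\<^sup>+\<omega>. indicator B \<omega> \<partial>M) + (\<integral>\<^sup>+\<omega>. indicator A \<omega> \<partial>M)"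
    by (rule nn_integral_add) measurable
  also have "(\<integral>\<^sup>+\<omega>. indicator A \<omega> \<partial>M) \<le> (\<integral>\<^sup>+\<omega>. ennreal (g \<omega>) * ennreal (N \<theta> (\<sigma> \<omega>) \<omega>) \<partial>M)"
  proof (rule nn_integral_mono)
    fix \<omega> assume om: "\<omega> \<in> space M"
    have "ennreal (indicator A \<omega>) \<le> ennreal (g \<omega> * N \<theta> (\<sigma> \<omega>) \<omega>)" by (rule ennreal_leI[OF geN[OF om]])
    then show "indicator A \<omega> \<le> ennreal (g \<omega>) * ennreal (N \<theta> (\<sigma> \<omega>) \<omega>)"
      using gnn[OF om] by (simp add: ennreal_mult ennreal_indicator)
  qed
  also have "(\<integral>\<^sup>+\<omega>. ennreal (g \<omega>) * ennreal (N \<theta> (\<sigma> \<omega>) \<omega>) \<partial>M) = (\<integral>\<^sup>+\<omega>. ennreal (g \<omega>) * ennreal (N \<theta> T \<omega>) \<partial>M)"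
    by (rule core_eq[symmetric])
  also have "(\<integral>\<^sup>+\<omega>. indicator B \<omega> \<partial>M) + (\<integral>\<^sup>+\<omega>. ennreal (g \<omega>) * ennreal (N \<theta> T \<omega>) \<partial>M)
      = (\<integral>\<^sup>+\<omega>. indicator B \<omega> + ennreal (g \<omega>) * ennreal (N \<theta> T \<omega>) \<partial>M)"
    by (rule nn_integral_add[symmetric]) measurable
  also have "\<dots> = (\<integral>\<^sup>+\<omega>. ennreal (I \<omega>) \<partial>M)"
  proof (rule nn_integral_cong)
    fix \<omega> assume om: "\<omega> \<in> space M"
    show "indicator B \<omega> + ennreal (g \<omega>) * ennreal (N \<theta> T \<omega>) = ennreal (I \<omega>)"
      unfolding eqI[OF om] using gnn[OF om]
      by (subst ennreal_plus) (auto simp: ennreal_mult ennreal_indicator)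
  qed
  finally have main: "(\<integral>\<^sup>+\<omega>. ennreal (exp (- \<alpha>A * (C \<omega> - payoff X Y (\<lambda>\<omega>. T) (\<lambda>\<omega>. T) \<omega>))) \<partial>M)
      \<le> (\<integral>\<^sup>+\<omega>. ennreal (exp (- \<alpha>A * (C \<omega> - payoff X Y (\<lambda>\<omega>. T) \<sigma> \<omega>))) \<partial>M)"
    unfolding one I_def by (simp add: add_left_mono)
  show ?thesis unfolding util_A_def X_def[symmetric] Y_def[symmetric] C_def[symmetric]
    by (rule neg_enn[OF main])
qed

end

theorem mainTheorem11:
  fixes M :: "'a measure" and F :: "real \<Rightarrow> 'a measure" and T :: real
    and W :: "real \<Rightarrow> 'a \<Rightarrow> real"
    and \<alpha>A \<alpha>B \<mu> \<delta> :: real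
  assumes fps: "filtered_prob_space_usual M F T"
    and BM: "std_brownian_motion M F T W"
    and aA: "\<alpha>A > 0" and aB: "\<alpha>B > 0"
    and mu_nn: "\<mu> \<ge> 0" and delta_nn: "\<delta> \<ge> 0"
    and mu_lo: "\<alpha>B / 2 < \<mu>" and mu_hi: "\<mu> < \<alpha>A / 2"
    and delta_lo: "0 < \<delta>" and delta_hi: "\<delta> < (\<alpha>A / 2 + \<mu>) * T"
  defines "X \<equiv> (\<lambda>t \<omega>. W t \<omega> + \<mu> * t)"
    and "Y \<equiv> (\<lambda>t \<omega>. W t \<omega> + \<mu> * t + \<delta>)"
  shows
    "(\<forall>\<sigma>\<in>stopping_times_0 M F T. \<forall>\<tau>\<in>stopping_times_0 M F T.
        util_B M \<alpha>B (\<lambda>\<omega>. 0) X Y \<tau> \<sigma> \<le> util_B M \<alpha>B (\<lambda>\<omega>. 0) X Y (\<lambda>\<omega>. T) \<sigma>)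
     \<and> (\<forall>\<sigma>\<in>stopping_times_0 M F T.
        util_A M \<alpha>A (\<lambda>\<omega>. 0) X Y (\<lambda>\<omega>. T) \<sigma> \<le> util_A M \<alpha>A (\<lambda>\<omega>. 0) X Y (\<lambda>\<omega>. T) (\<lambda>\<omega>. 0))
     \<and> (\<forall>\<sigma>\<in>stopping_times_0 M F T.
        util_A M \<alpha>A (\<lambda>\<omega>. W T \<omega> + \<mu> * T) X Y (\<lambda>\<omega>. T) \<sigma>
          \<le> util_A M \<alpha>A (\<lambda>\<omega>. W T \<omega> + \<mu> * T) X Y (\<lambda>\<omega>. T) (\<lambda>\<omega>. T))"
proof -
  interpret bm M F T W by (rule bm.intro[OF fps BM])
  show ?thesis unfolding X_def Y_def
    using partA[OF aB mu_lo delta_nn] partB[OF aA mu_nn delta_hi] partC[OF aA mu_hi delta_nn] by blast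
qed

end
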